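(* Let $\mathcal{X}=\{x_k\}_{k=1}^\infty$ be a frame for an infinite dimensional (separable) real or complex Hilbert space $\mathbb{H}$. The following are equivalent: (1) $\mathcal{X}$ is injective; (2) for every orthonormal basis $\mathcal{E}=\{e_j\}_{j=1}^\infty$ of $\mathbb{H}$, \[ \overline{\mathrm{span}}\{(|\langle x_k,e_1\rangle|^2,|\langle x_k,e_2\rangle|^2,\dots):k=1,2,\dots\}=\ell_2,\] the closed linear span being taken in the real space $\ell_2$.
   Context: A family $\{x_k\}$ in a Hilbert space is called injective if whenever a Hilbert–Schmidt self-adjoint operator $T$ satisfies $\langle Tx_k,x_k\rangle=0$ for all $k$, then $T=0$. *)

theory Defs
  imports "HOL-Analysis.Analysis"
begin

text \<open>
  A complex
  Hilbert space is encoded as its underlying real Hilbert space together with an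
  orthogonal complex structure J (multiplication by i); the complex inner product
  is then  <x,y> = inner x y + i * inner x (J y)  (linear in the first argument),
  and complex scalar multiplication is (a + i b) x = a x + b J x.
\<close>

datatype scalar_field = Real_field | Complex_field

definition cplx_structure :: "('a::real_inner \<Rightarrow> 'a) \<Rightarrow> bool" where
  "cplx_structure J \<longleftrightarrow> linear J \<and> (\<forall>x. J (J x) = - x) \<and> (\<forall>x y. inner (J x) (J y) = inner x y)"

definition admissible :: "scalar_field \<Rightarrow> ('a::real_inner \<Rightarrow> 'a) \<Rightarrow> bool" where
  "admissible F J \<longleftrightarrow> (F = Complex_field \<longrightarrow> cplx_structure J)"

definition scal :: "scalar_field \<Rightarrow> complex set" where
  "scal F = (case F of Real_field \<Rightarrow> \<real> | Complex_field \<Rightarrow> UNIV)"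

definition smul :: "scalar_field \<Rightarrow> ('a::real_vector \<Rightarrow> 'a) \<Rightarrow> complex \<Rightarrow> 'a \<Rightarrow> 'a" where
  "smul F J c x = (case F of Real_field \<Rightarrow> Re c *\<^sub>R x
                            | Complex_field \<Rightarrow> Re c *\<^sub>R x + Im c *\<^sub>R J x)"

definition hip :: "scalar_field \<Rightarrow> ('a::real_inner \<Rightarrow> 'a) \<Rightarrow> 'a \<Rightarrow> 'a \<Rightarrow> complex" where
  "hip F J x y = (case F of Real_field \<Rightarrow> complex_of_real (inner x y)
                           | Complex_field \<Rightarrow> Complex (inner x y) (inner x (J y)))"

definition bounded_op :: "scalar_field \<Rightarrow> ('a::real_inner \<Rightarrow> 'a) \<Rightarrow> ('a \<Rightarrow> 'a) \<Rightarrow> bool" where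
  "bounded_op F J T \<longleftrightarrow> bounded_linear T \<and> (\<forall>c\<in>scal F. \<forall>x. T (smul F J c x) = smul F J c (T x))"

definition self_adjoint_op :: "scalar_field \<Rightarrow> ('a::real_inner \<Rightarrow> 'a) \<Rightarrow> ('a \<Rightarrow> 'a) \<Rightarrow> bool" where
  "self_adjoint_op F J T \<longleftrightarrow> (\<forall>x y. hip F J (T x) y = hip F J x (T y))"

definition orthonormal_basis :: "scalar_field \<Rightarrow> ('a::real_inner \<Rightarrow> 'a) \<Rightarrow> (nat \<Rightarrow> 'a) \<Rightarrow> bool" where
  "orthonormal_basis F J e \<longleftrightarrow>
     (\<forall>i j. hip F J (e i) (e j) = (if i = j then 1 else 0)) \<and>
     (\<forall>x. (\<forall>j. hip F J x (e j) = 0) \<longrightarrow> x = 0)"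

definition hilbert_schmidt :: "scalar_field \<Rightarrow> ('a::real_inner \<Rightarrow> 'a) \<Rightarrow> ('a \<Rightarrow> 'a) \<Rightarrow> bool" where
  "hilbert_schmidt F J T \<longleftrightarrow> bounded_op F J T \<and>
     (\<exists>e. orthonormal_basis F J e \<and> summable (\<lambda>j. (norm (T (e j)))\<^sup>2))"

definition is_frame :: "scalar_field \<Rightarrow> ('a::real_inner \<Rightarrow> 'a) \<Rightarrow> (nat \<Rightarrow> 'a) \<Rightarrow> bool" where
  "is_frame F J X \<longleftrightarrow> (\<exists>A B. 0 < A \<and> (\<forall>y.
      summable (\<lambda>k. (cmod (hip F J y (X k)))\<^sup>2) \<and>
      A * (norm y)\<^sup>2 \<le> (\<Sum>k. (cmod (hip F J y (X k)))\<^sup>2) \<and>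
      (\<Sum>k. (cmod (hip F J y (X k)))\<^sup>2) \<le> B * (norm y)\<^sup>2))"

definition injective_family :: "scalar_field \<Rightarrow> ('a::real_inner \<Rightarrow> 'a) \<Rightarrow> (nat \<Rightarrow> 'a) \<Rightarrow> bool" where
  "injective_family F J X \<longleftrightarrow> (\<forall>T. hilbert_schmidt F J T \<and> self_adjoint_op F J T \<and>
      (\<forall>k. hip F J (T (X k)) (X k) = 0) \<longrightarrow> (\<forall>x. T x = 0))"

definition l2_seqs :: "(nat \<Rightarrow> real) set" where
  "l2_seqs = {a. summable (\<lambda>j. (a j)\<^sup>2)}"

definition l2_norm :: "(nat \<Rightarrow> real) \<Rightarrow> real" where
  "l2_norm a = sqrt (\<Sum>j. (a j)\<^sup>2)"

definition l2_closed_span :: "(nat \<Rightarrow> nat \<Rightarrow> real) \<Rightarrow> (nat \<Rightarrow> real) set" where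
  "l2_closed_span v = {a \<in> l2_seqs. \<forall>\<epsilon>>0. \<exists>N c.
      (\<lambda>j. \<Sum>k<N. c k * v k j) \<in> l2_seqs \<and>
      l2_norm (\<lambda>j. a j - (\<Sum>k<N. c k * v k j)) < \<epsilon>}"

end

theory Submission
  imports Defs
begin

lemma cplx_J:
  assumes "cplx_structure J"
  shows "linear J" "J (J x) = - x" "inner (J x) (J y) = inner x y"
    "inner (J x) y = - inner x (J y)" "inner x (J x) = 0" "norm (J x) = norm x"
proof -
  show lin: "linear J" using assms by (simp add: cplx_structure_def)
  show JJ: "J (J x) = - x" using assms by (simp add: cplx_structure_def)
  show ii: "\<And>x y. inner (J x) (J y) = inner x y" using assms by (simp add: cplx_structure_def)
  have *: "inner (J a) b = - inner a (J b)" for a b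
  proof -
    have "inner (J a) b = inner (J (J a)) (J b)" using ii by simp
    also have "\<dots> = - inner a (J b)" using assms by (simp add: cplx_structure_def)
    finally show ?thesis .
  qed
  show "inner (J x) y = - inner x (J y)" by (rule *)
  have "inner x (J x) = inner (J x) x" by (simp add: inner_commute)
  with *[of x x] show "inner x (J x) = 0" by simp
  show "norm (J x) = norm x" using ii[of x x] by (simp add: norm_eq_sqrt_inner)
qed

locale hsp =
  fixes F :: scalar_field and J :: "'a::{real_inner,complete_space} \<Rightarrow> 'a"
  assumes adm: "admissible F J"
begin

lemma cJ: "F = Complex_field \<Longrightarrow> cplx_structure J"
  using adm by (simp add: admissible_def)

lemma J_add: "F = Complex_field \<Longrightarrow> J (x + y) = J x + J y"
  using cplx_J(1)[OF cJ] by (simp add: linear_add)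
lemma J_scale: "F = Complex_field \<Longrightarrow> J (r *\<^sub>R x) = r *\<^sub>R J x"
  using cplx_J(1)[OF cJ] by (simp add: linear_scale)
lemma J_zero: "F = Complex_field \<Longrightarrow> J 0 = 0"
  using cplx_J(1)[OF cJ] by (simp add: linear_0)
lemma J_minus: "F = Complex_field \<Longrightarrow> J (- x) = - J x"
  using cplx_J(1)[OF cJ] by (simp add: linear_neg)
lemma J_diff: "F = Complex_field \<Longrightarrow> J (x - y) = J x - J y"
  using cplx_J(1)[OF cJ] by (simp add: linear_diff)

lemma hip_Re: "Re (hip F J x y) = inner x y"
  by (cases F) (auto simp: hip_def)

lemma hip_self: "hip F J x x = complex_of_real ((norm x)\<^sup>2)"
  by (cases F) (auto simp: hip_def cplx_J[OF cJ] power2_norm_eq_inner complex_eq_iff)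

lemma hip_sym: "hip F J y x = cnj (hip F J x y)"
proof (cases F)
  case Real_field then show ?thesis by (simp add: hip_def inner_commute)
next
  case Complex_field
  have "inner y (J x) = - inner x (J y)"
    using cplx_J(4)[OF cJ[OF Complex_field], of y x] by (simp add: inner_commute)
  then show ?thesis using Complex_field by (simp add: hip_def inner_commute complex_eq_iff)
qed

lemma hip_add1: "hip F J (x + z) y = hip F J x y + hip F J z y"
  by (cases F) (auto simp: hip_def inner_add_left complex_eq_iff)
lemma hip_add2: "hip F J y (x + z) = hip F J y x + hip F J y z"
  by (cases F) (auto simp: hip_def inner_add_right J_add complex_eq_iff)
lemma hip_diff1: "hip F J (x - z) y = hip F J x y - hip F J z y"
  by (cases F) (auto simp: hip_def inner_diff_left complex_eq_iff)
lemma hip_diff2: "hip F J y (x - z) = hip F J y x - hip F J y z"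
  by (cases F) (auto simp: hip_def inner_diff_right J_diff complex_eq_iff)
lemma hip_zero1[simp]: "hip F J 0 y = 0"
  by (cases F) (auto simp: hip_def complex_eq_iff)
lemma hip_zero2[simp]: "hip F J y 0 = 0"
  by (cases F) (auto simp: hip_def J_zero complex_eq_iff)
lemma hip_minus1: "hip F J (- x) y = - hip F J x y"
  by (cases F) (auto simp: hip_def complex_eq_iff)
lemma hip_minus2: "hip F J y (- x) = - hip F J y x"
  by (cases F) (auto simp: hip_def J_minus complex_eq_iff)
lemma hip_scaleR1: "hip F J (r *\<^sub>R x) y = of_real r * hip F J x y"
  by (cases F) (auto simp: hip_def complex_eq_iff)
lemma hip_scaleR2: "hip F J y (r *\<^sub>R x) = of_real r * hip F J y x"
  by (cases F) (auto simp: hip_def complex_eq_iff J_scale)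
lemma hip_sum1: "hip F J (\<Sum>i\<in>S. f i) y = (\<Sum>i\<in>S. hip F J (f i) y)"
  by (induction S rule: infinite_finite_induct) (auto simp: hip_add1)
lemma hip_sum2: "hip F J y (\<Sum>i\<in>S. f i) = (\<Sum>i\<in>S. hip F J y (f i))"
  by (induction S rule: infinite_finite_induct) (auto simp: hip_add2)

lemma scal_R[simp]: "scal Real_field = \<real>" "scal Complex_field = UNIV"
  by (auto simp: scal_def)

lemma scal_Real: "F = Real_field \<Longrightarrow> c \<in> scal F \<longleftrightarrow> Im c = 0"
  by (auto simp: scal_def complex_is_Real_iff)
lemma scal_of_real[simp]: "complex_of_real r \<in> scal F"
  by (cases F) (auto simp: scal_def)
lemma scal_mult: "c \<in> scal F \<Longrightarrow> d \<in> scal F \<Longrightarrow> c * d \<in> scal F"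
  by (cases F) (auto simp: scal_def)
lemma scal_add: "c \<in> scal F \<Longrightarrow> d \<in> scal F \<Longrightarrow> c + d \<in> scal F"
  by (cases F) (auto simp: scal_def)
lemma scal_cnj: "c \<in> scal F \<Longrightarrow> cnj c \<in> scal F"
  by (cases F) (auto simp: scal_def Reals_cnj_iff)
lemma hip_scal[simp]: "hip F J x y \<in> scal F"
  by (cases F) (auto simp: scal_def hip_def)

lemma hip_smul1:
  assumes "c \<in> scal F" shows "hip F J (smul F J c x) y = c * hip F J x y"
proof (cases F)
  case Real_field
  with assms have "c = of_real (Re c)" by (simp add: scal_Real complex_eq_iff)
  then show ?thesis using Real_field by (auto simp: hip_def smul_def complex_eq_iff)
next
  case Complex_field
  note j = cplx_J[OF cJ[OF Complex_field]]
  show ?thesis using Complex_field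
    by (simp add: hip_def smul_def complex_eq_iff inner_add_left j)
qed

lemma hip_smul2:
  assumes "c \<in> scal F" shows "hip F J y (smul F J c x) = cnj c * hip F J y x"
  using hip_smul1[OF assms, of x y] by (metis complex_cnj_mult hip_sym)

lemma smul_add: "smul F J c (x + y) = smul F J c x + smul F J c y"
  by (cases F) (auto simp: smul_def J_add scaleR_add_right)
lemma smul_diff: "smul F J c (x - y) = smul F J c x - smul F J c y"
  by (cases F) (auto simp: smul_def J_diff scaleR_diff_right)
lemma smul_zero[simp]: "smul F J c 0 = 0"
  by (cases F) (auto simp: smul_def J_zero)
lemma smul_zero_c[simp]: "smul F J 0 x = 0"
  by (cases F) (auto simp: smul_def)
lemma smul_of_real[simp]: "smul F J (complex_of_real r) x = r *\<^sub>R x"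
  by (cases F) (auto simp: smul_def)
lemma smul_addc: "smul F J (c + d) x = smul F J c x + smul F J d x"
  by (cases F) (auto simp: smul_def scaleR_add_left)
lemma smul_sum: "smul F J c (\<Sum>i\<in>S. f i) = (\<Sum>i\<in>S. smul F J c (f i))"
  by (induction S rule: infinite_finite_induct) (auto simp: smul_add)
lemma smul_sumc: "smul F J (\<Sum>i\<in>S. f i) x = (\<Sum>i\<in>S. smul F J (f i) x)"
  by (induction S rule: infinite_finite_induct) (auto simp: smul_addc)

lemma smul_mult:
  assumes "c \<in> scal F" "d \<in> scal F"
  shows "smul F J (c * d) x = smul F J c (smul F J d x)"
proof (cases F)
  case Real_field
  with assms show ?thesis by (auto simp: smul_def complex_is_Real_iff)
next
  case Complex_field
  note j = cplx_J[OF cJ[OF Complex_field]]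
  show ?thesis using Complex_field
    by (simp add: smul_def J_add J_scale j algebra_simps)
qed

lemma norm_smul: assumes "c \<in> scal F" shows "norm (smul F J c x) = cmod c * norm x"
proof -
  have "(norm (smul F J c x))\<^sup>2 = Re (hip F J (smul F J c x) (smul F J c x))"
    by (simp add: hip_self)
  also have "\<dots> = Re (c * cnj c * complex_of_real ((norm x)\<^sup>2))"
    by (subst hip_smul1[OF assms], subst hip_smul2[OF assms]) (simp only: hip_self mult.assoc)
  also have "\<dots> = (cmod c)\<^sup>2 * (norm x)\<^sup>2"
    by (simp only: complex_mult_cnj) (simp del: of_real_power add: cmod_power2)
  also have "\<dots> = (cmod c * norm x)\<^sup>2" by (simp add: power_mult_distrib)
  finally show ?thesis
    by (subst (asm) power2_eq_iff_nonneg) auto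
qed

lemma hip_bound: "cmod (hip F J x y) \<le> norm x * norm y"
proof (cases "hip F J x y = 0")
  case True then show ?thesis by simp
next
  case False
  define w where "w = hip F J x y / complex_of_real (cmod (hip F J x y))"
  have ws: "w \<in> scal F" unfolding w_def
    by (cases F) (auto simp: hip_def)
  have wn: "cmod w = 1" using False by (simp add: w_def norm_divide)
  have "hip F J x (smul F J w y) = cnj w * hip F J x y" by (simp add: hip_smul2 ws)
  also have "\<dots> = complex_of_real (cmod (hip F J x y))"
    using False unfolding w_def
    by (simp add: complex_mult_cnj divide_simps cmod_power2 power2_eq_square complex_eq_iff)
       (simp add: cmod_def power2_eq_square)
  finally have "cmod (hip F J x y) = inner x (smul F J w y)"
    by (metis hip_Re Re_complex_of_real)
  also have "\<dots> \<le> norm x * norm (smul F J w y)" by (rule Cauchy_Schwarz_ineq2[THEN order_trans[OF abs_ge_self]])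
  also have "\<dots> = norm x * norm y" by (simp add: norm_smul ws wn)
  finally show ?thesis .
qed

end


definition onz :: "scalar_field \<Rightarrow> ('a::real_inner \<Rightarrow> 'a) \<Rightarrow> (nat \<Rightarrow> 'a) \<Rightarrow> bool" where
  "onz F J u \<longleftrightarrow> (\<forall>i j. i \<noteq> j \<longrightarrow> hip F J (u i) (u j) = 0) \<and> (\<forall>i. u i = 0 \<or> norm (u i) = 1)"

definition psi :: "scalar_field \<Rightarrow> ('a::real_inner \<Rightarrow> 'a) \<Rightarrow> (nat \<Rightarrow> 'a) \<Rightarrow> (nat \<Rightarrow> complex) \<Rightarrow> 'a" where
  "psi F J u c = (\<Sum>j. smul F J (c j) (u j))"

context hsp begin

lemma bounded_bilinear_hip: "bounded_bilinear (hip F J)"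
proof (rule bounded_bilinear.intro)
  show "\<exists>K. \<forall>a b. norm (hip F J a b) \<le> norm a * norm b * K"
    using hip_bound by (intro exI[of _ 1]) auto
qed (auto simp: hip_add1 hip_add2 hip_scaleR1 hip_scaleR2 scaleR_conv_of_real)

lemma tendsto_hip[tendsto_intros]:
  "(f \<longlongrightarrow> a) G \<Longrightarrow> (g \<longlongrightarrow> b) G \<Longrightarrow> ((\<lambda>n. hip F J (f n) (g n)) \<longlongrightarrow> hip F J a b) G"
  by (rule bounded_bilinear.tendsto[OF bounded_bilinear_hip])

lemma continuous_on_hip1: "continuous_on S (\<lambda>x. hip F J x y)"
  by (rule linear_continuous_on, rule bounded_bilinear.bounded_linear_left[OF bounded_bilinear_hip])

lemma onz_hip: "onz F J u \<Longrightarrow> hip F J (u i) (u j) = (if i = j \<and> u i \<noteq> 0 then 1 else 0)"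
  by (auto simp: onz_def hip_self)

lemma hip_comb:
  assumes u: "onz F J u" and c: "\<And>j. j \<in> S \<Longrightarrow> c j \<in> scal F" and S: "finite S"
  shows "hip F J (\<Sum>j\<in>S. smul F J (c j) (u j)) (u i) = (if i \<in> S \<and> u i \<noteq> 0 then c i else 0)"
proof -
  have "hip F J (\<Sum>j\<in>S. smul F J (c j) (u j)) (u i) = (\<Sum>j\<in>S. c j * hip F J (u j) (u i))"
    by (simp add: hip_sum1 hip_smul1 c)
  also have "\<dots> = (\<Sum>j\<in>S. if j = i then (if u i \<noteq> 0 then c i else 0) else 0)"
    by (rule sum.cong) (auto simp: onz_hip[OF u])
  also have "\<dots> = (if i \<in> S \<and> u i \<noteq> 0 then c i else 0)"
    using S by (simp add: sum.delta')
  finally show ?thesis .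
qed

lemma hip_comb2:
  assumes u: "onz F J u" and c: "\<And>j. j \<in> S \<Longrightarrow> c j \<in> scal F" and S: "finite S"
  shows "hip F J x (\<Sum>j\<in>S. smul F J (c j) (u j)) = (\<Sum>j\<in>S. cnj (c j) * hip F J x (u j))"
  by (simp add: hip_sum2 hip_smul2 c)

lemma cnjsq: "Re (cnj z * z) = (cmod z)\<^sup>2" "Re z * Re z + Im z * Im z = (cmod z)\<^sup>2"
  by (subst cmod_power2, simp add: power2_eq_square)+

lemma norm_comb:
  assumes u: "onz F J u" and c: "\<And>j. j \<in> S \<Longrightarrow> c j \<in> scal F" and S: "finite S"
  shows "(norm (\<Sum>j\<in>S. smul F J (c j) (u j)))\<^sup>2 = (\<Sum>j\<in>S. if u j = 0 then 0 else (cmod (c j))\<^sup>2)"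
proof -
  let ?s = "\<Sum>j\<in>S. smul F J (c j) (u j)"
  have "(norm ?s)\<^sup>2 = Re (hip F J ?s ?s)" by (simp add: hip_self)
  also have "\<dots> = Re (\<Sum>j\<in>S. cnj (c j) * hip F J ?s (u j))"
    by (subst hip_comb2[OF u c S]) auto
  also have "\<dots> = Re (\<Sum>j\<in>S. if u j = 0 then 0 else cnj (c j) * c j)"
    by (rule arg_cong[where f=Re], rule sum.cong) (auto simp: hip_comb[OF u c S])
  also have "\<dots> = (\<Sum>j\<in>S. if u j = 0 then 0 else (cmod (c j))\<^sup>2)"
    unfolding Re_sum by (rule sum.cong) (auto simp: cnjsq)
  finally show ?thesis .
qed

end


lemma summable_Cauchy_cs:
  fixes v :: "nat \<Rightarrow> 'a::{real_normed_vector, complete_space}"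
  assumes "\<And>e. e > 0 \<Longrightarrow> \<exists>N. \<forall>m\<ge>N. \<forall>n. norm (sum v {m..<n}) < e"
  shows "summable v"
  unfolding summable_iff_convergent Cauchy_convergent_iff[symmetric]
proof (rule metric_CauchyI)
  fix e :: real assume "e > 0"
  then obtain N where N: "\<And>m n. m \<ge> N \<Longrightarrow> norm (sum v {m..<n}) < e" using assms by blast
  show "\<exists>M. \<forall>m\<ge>M. \<forall>n\<ge>M. dist (\<Sum>i<m. v i) (\<Sum>i<n. v i) < e"
  proof (intro exI allI impI)
    fix m n assume m: "m \<ge> N" and n: "n \<ge> N"
    have *: "a \<le> b \<Longrightarrow> (\<Sum>i<b. v i) - (\<Sum>i<a. v i) = sum v {a..<b}" for a b
      by (metis add_diff_cancel_left' atLeast0LessThan le0 sum.atLeastLessThan_concat)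
    show "dist (\<Sum>i<m. v i) (\<Sum>i<n. v i) < e"
    proof (cases "m \<le> n")
      case True then show ?thesis using N[OF m, of n] *[OF True]
        by (simp add: dist_norm norm_minus_commute[of "sum v {..<m}"])
    next
      case False then show ?thesis using N[OF n, of m] *[of n m] by (simp add: dist_norm)
    qed
  qed
qed

context hsp begin

lemma psi_sums:
  assumes u: "onz F J u" and c: "\<And>j. c j \<in> scal F" and s: "summable (\<lambda>j. (cmod (c j))\<^sup>2)"
  shows "(\<lambda>j. smul F J (c j) (u j)) sums psi F J u c"
proof -
  have "summable (\<lambda>j. smul F J (c j) (u j))"
  proof (rule summable_Cauchy_cs)
    fix e :: real assume e: "e > 0"
    then have "e\<^sup>2 > 0" by simp
    with s[unfolded summable_Cauchy] obtain N where
      N: "\<And>m n. m \<ge> N \<Longrightarrow> norm (\<Sum>j\<in>{m..<n}. (cmod (c j))\<^sup>2) < e\<^sup>2" by blast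
    show "\<exists>N. \<forall>m\<ge>N. \<forall>n. norm (sum (\<lambda>j. smul F J (c j) (u j)) {m..<n}) < e"
    proof (intro exI allI impI)
      fix m n assume m: "m \<ge> N"
      have "(norm (\<Sum>j\<in>{m..<n}. smul F J (c j) (u j)))\<^sup>2 = (\<Sum>j\<in>{m..<n}. if u j = 0 then 0 else (cmod (c j))\<^sup>2)"
        by (rule norm_comb[OF u]) (auto simp: c)
      also have "\<dots> \<le> (\<Sum>j\<in>{m..<n}. (cmod (c j))\<^sup>2)"
        by (rule sum_mono) auto
      also have "\<dots> < e\<^sup>2" using N[OF m, of n] by (simp add: sum_nonneg)
      finally show "norm (\<Sum>j\<in>{m..<n}. smul F J (c j) (u j)) < e"
        by (rule power2_less_imp_less) (use e in auto)
    qed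
  qed
  then show ?thesis unfolding psi_def by (rule summable_sums)
qed

lemma psi_hip_sums:
  assumes u: "onz F J u" and c: "\<And>j. c j \<in> scal F" and s: "summable (\<lambda>j. (cmod (c j))\<^sup>2)"
  shows "(\<lambda>j. c j * hip F J (u j) y) sums hip F J (psi F J u c) y"
proof -
  have "(\<lambda>n. \<Sum>j<n. smul F J (c j) (u j)) \<longlonglongrightarrow> psi F J u c"
    using psi_sums[OF assms] by (simp add: sums_def)
  then have "(\<lambda>n. hip F J (\<Sum>j<n. smul F J (c j) (u j)) y) \<longlonglongrightarrow> hip F J (psi F J u c) y"
    by (intro tendsto_hip tendsto_const)
  then show ?thesis by (simp add: sums_def hip_sum1 hip_smul1 c)
qed

lemma psi_hip2_sums:
  assumes u: "onz F J u" and c: "\<And>j. c j \<in> scal F" and s: "summable (\<lambda>j. (cmod (c j))\<^sup>2)"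
  shows "(\<lambda>j. cnj (c j) * hip F J y (u j)) sums hip F J y (psi F J u c)"
proof -
  have "(\<lambda>n. \<Sum>j<n. smul F J (c j) (u j)) \<longlonglongrightarrow> psi F J u c"
    using psi_sums[OF assms] by (simp add: sums_def)
  then have "(\<lambda>n. hip F J y (\<Sum>j<n. smul F J (c j) (u j))) \<longlonglongrightarrow> hip F J y (psi F J u c)"
    by (intro tendsto_hip tendsto_const)
  then show ?thesis by (simp add: sums_def hip_sum2 hip_smul2 c)
qed

lemma psi_coef:
  assumes u: "onz F J u" and c: "\<And>j. c j \<in> scal F" and s: "summable (\<lambda>j. (cmod (c j))\<^sup>2)"
  shows "hip F J (psi F J u c) (u i) = (if u i = 0 then 0 else c i)"
proof -
  have "(\<lambda>j. c j * hip F J (u j) (u i)) = (\<lambda>j. if j = i then (if u i = 0 then 0 else c i) else 0)"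
    by (auto simp: onz_hip[OF u])
  with psi_hip_sums[OF assms, of "u i"] have
    "(\<lambda>j. if j = i then (if u i = 0 then 0 else c i) else 0) sums hip F J (psi F J u c) (u i)" by simp
  moreover have "(\<lambda>j. if j = i then (if u i = 0 then 0 else c i) else 0) sums (if u i = 0 then 0 else c i)"
    using sums_single[of i "\<lambda>_. if u i = 0 then 0 else c i"] by simp
  ultimately show ?thesis by (rule sums_unique2)
qed

lemma psi_norm:
  assumes u: "onz F J u" and c: "\<And>j. c j \<in> scal F" and s: "summable (\<lambda>j. (cmod (c j))\<^sup>2)"
  shows "(\<lambda>j. if u j = 0 then 0 else (cmod (c j))\<^sup>2) sums (norm (psi F J u c))\<^sup>2"
proof -
  have "(\<lambda>n. \<Sum>j<n. smul F J (c j) (u j)) \<longlonglongrightarrow> psi F J u c"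
    using psi_sums[OF assms] by (simp add: sums_def)
  then have "(\<lambda>n. (norm (\<Sum>j<n. smul F J (c j) (u j)))\<^sup>2) \<longlonglongrightarrow> (norm (psi F J u c))\<^sup>2"
    by (intro tendsto_intros)
  then show ?thesis by (simp add: sums_def norm_comb[OF u] c)
qed

lemma bessel_fin:
  assumes u: "onz F J u"
  shows "(\<Sum>j<n. (cmod (hip F J x (u j)))\<^sup>2) \<le> (norm x)\<^sup>2"
proof -
  define c where "c j = hip F J x (u j)" for j
  have cs: "c j \<in> scal F" for j by (simp add: c_def)
  have c0: "u j = 0 \<Longrightarrow> c j = 0" for j by (simp add: c_def)
  define s where "s = (\<Sum>j<n. smul F J (c j) (u j))"
  have hs: "hip F J s (u i) = (if i < n \<and> u i \<noteq> 0 then c i else 0)" for i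
    unfolding s_def by (subst hip_comb[OF u]) (auto simp: cs)
  have "hip F J (x - s) s = (\<Sum>j<n. cnj (c j) * hip F J (x - s) (u j))"
    unfolding s_def[symmetric] by (subst (2) s_def, subst hip_comb2[OF u]) (auto simp: cs)
  also have "\<dots> = 0"
    by (rule sum.neutral) (auto simp: hip_diff1 hs c_def[symmetric] c0)
  finally have "inner (x - s) s = 0" by (metis hip_Re zero_complex.sel(1))
  then have "(norm x)\<^sup>2 = (norm (x - s))\<^sup>2 + (norm s)\<^sup>2"
    using dot_norm[of "x - s" s] by simp
  moreover have "(norm s)\<^sup>2 = (\<Sum>j<n. (cmod (c j))\<^sup>2)"
    unfolding s_def by (subst norm_comb[OF u]) (auto simp: cs c0 intro!: sum.cong)
  ultimately show ?thesis by (simp add: c_def)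
qed

lemma bessel:
  assumes u: "onz F J u"
  shows "summable (\<lambda>j. (cmod (hip F J x (u j)))\<^sup>2)" "(\<Sum>j. (cmod (hip F J x (u j)))\<^sup>2) \<le> (norm x)\<^sup>2"
proof -
  show s: "summable (\<lambda>j. (cmod (hip F J x (u j)))\<^sup>2)"
    by (rule summableI_nonneg_bounded[where x="(norm x)\<^sup>2"]) (auto simp: bessel_fin[OF u])
  show "(\<Sum>j. (cmod (hip F J x (u j)))\<^sup>2) \<le> (norm x)\<^sup>2"
    by (rule suminf_le_const[OF s]) (simp add: bessel_fin[OF u])
qed

lemma onb_onz: assumes "orthonormal_basis F J e" shows "onz F J e"
proof -
  have n1: "norm (e i) = 1" for i
  proof -
    have "hip F J (e i) (e i) = 1"
      using assms[unfolded orthonormal_basis_def] by simp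
    then have "complex_of_real ((norm (e i))\<^sup>2) = 1"
      by (simp only: hip_self)
    then have "(norm (e i))\<^sup>2 = 1"
      using of_real_eq_1_iff by blast
    then have "norm (e i) = 1 \<or> norm (e i) = - 1" using power2_eq_1_iff by blast
    moreover have "norm (e i) \<ge> 0" by simp
    ultimately show ?thesis by linarith
  qed
  then show ?thesis using assms unfolding orthonormal_basis_def onz_def by auto
qed

lemma onb_nz: assumes "orthonormal_basis F J e" shows "e i \<noteq> 0"
proof
  assume "e i = 0"
  moreover have "hip F J (e i) (e i) = 1" using assms[unfolded orthonormal_basis_def] by simp
  ultimately show False by simp
qed

lemma onb_complete: "orthonormal_basis F J e \<Longrightarrow> (\<And>j. hip F J x (e j) = 0) \<Longrightarrow> x = 0"
  unfolding orthonormal_basis_def by blast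

lemma proj_orth:
  assumes u: "onz F J u"
  shows "hip F J (x - psi F J u (\<lambda>j. hip F J x (u j))) (u i) = 0"
  using psi_coef[OF u _ bessel(1)[OF u]] by (simp add: hip_diff1)

lemma onb_expand:
  assumes e: "orthonormal_basis F J e"
  shows "x = psi F J e (\<lambda>j. hip F J x (e j))"
  using onb_complete[OF e proj_orth[OF onb_onz[OF e]]] by simp

lemma parseval:
  assumes e: "orthonormal_basis F J e"
  shows "(\<lambda>j. (cmod (hip F J x (e j)))\<^sup>2) sums (norm x)\<^sup>2"
  using psi_norm[OF onb_onz[OF e] _ bessel(1)[OF onb_onz[OF e]], of x]
     onb_expand[OF e, of x, symmetric] onb_nz[OF e] by simp

lemma parseval2:
  assumes e: "orthonormal_basis F J e"
  shows "(\<lambda>j. hip F J x (e j) * cnj (hip F J y (e j))) sums hip F J x y"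
  using psi_hip_sums[OF onb_onz[OF e] _ bessel(1)[OF onb_onz[OF e]], of x y]
     onb_expand[OF e, of x, symmetric]
  by (simp add: hip_sym[of "e _" y])

end


definition nrm :: "'a::real_normed_vector \<Rightarrow> 'a" where
  "nrm x = inverse (norm x) *\<^sub>R x"

fun gsl :: "scalar_field \<Rightarrow> ('a::real_inner \<Rightarrow> 'a) \<Rightarrow> (nat \<Rightarrow> 'a) \<Rightarrow> nat \<Rightarrow> 'a list" where
  "gsl F J s 0 = []"
| "gsl F J s (Suc n) = gsl F J s n @
     [nrm (s n - (\<Sum>i<n. smul F J (hip F J (s n) (gsl F J s n ! i)) (gsl F J s n ! i)))]"

definition gs :: "scalar_field \<Rightarrow> ('a::real_inner \<Rightarrow> 'a) \<Rightarrow> (nat \<Rightarrow> 'a) \<Rightarrow> nat \<Rightarrow> 'a" where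
  "gs F J s n = gsl F J s (Suc n) ! n"

definition gres :: "scalar_field \<Rightarrow> ('a::real_inner \<Rightarrow> 'a) \<Rightarrow> (nat \<Rightarrow> 'a) \<Rightarrow> nat \<Rightarrow> 'a" where
  "gres F J s n = s n - (\<Sum>i<n. smul F J (hip F J (s n) (gs F J s i)) (gs F J s i))"

lemma length_gsl[simp]: "length (gsl F J s n) = n"
  by (induction n) auto

lemma gsl_nth: "i < n \<Longrightarrow> gsl F J s n ! i = gs F J s i"
proof (induction n)
  case 0 then show ?case by simp
next
  case (Suc n)
  then show ?case
    by (cases "i < n") (auto simp: nth_append gs_def less_Suc_eq)
qed

lemma gs_eq: "gs F J s n = nrm (gres F J s n)"
proof -
  have "gs F J s n = nrm (s n - (\<Sum>i<n. smul F J (hip F J (s n) (gsl F J s n ! i)) (gsl F J s n ! i)))"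
    by (simp add: gs_def nth_append)
  also have "(\<Sum>i<n. smul F J (hip F J (s n) (gsl F J s n ! i)) (gsl F J s n ! i)) =
      (\<Sum>i<n. smul F J (hip F J (s n) (gs F J s i)) (gs F J s i))"
    by (rule sum.cong) (auto simp: gsl_nth)
  finally show ?thesis by (simp add: gres_def)
qed

lemma norm_nrm: "norm (nrm x) = (if x = 0 then 0 else 1)"
  by (simp add: nrm_def)

lemma nrm_zero_iff: "nrm x = 0 \<longleftrightarrow> x = 0"
  by (simp add: nrm_def)

lemma nrm_0[simp]: "nrm 0 = 0"
  by (simp add: nrm_def)

lemma nrm_scale: "norm x *\<^sub>R nrm x = x"
  by (cases "x = 0") (simp_all add: nrm_def)

context hsp begin

lemma onz_trunc:
  assumes "\<forall>i<n. \<forall>j<n. i \<noteq> j \<longrightarrow> hip F J (u i) (u j) = 0" "\<forall>i. u i = 0 \<or> norm (u i) = 1"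
  shows "onz F J (\<lambda>i. if i < n then u i else 0)"
  using assms unfolding onz_def by auto

lemma gs_orth_aux: "\<forall>i<n. \<forall>j<n. i \<noteq> j \<longrightarrow> hip F J (gs F J s i) (gs F J s j) = 0"
proof (induction n)
  case 0 then show ?case by simp
next
  case (Suc n)
  let ?u = "\<lambda>i. if i < n then gs F J s i else 0"
  have nu: "\<forall>i. gs F J s i = 0 \<or> norm (gs F J s i) = 1" by (simp add: gs_eq norm_nrm)
  have u: "onz F J ?u" by (rule onz_trunc[OF Suc.IH nu])
  have new: "hip F J (gs F J s n) (gs F J s i) = 0" if i: "i < n" for i
  proof -
    have "gres F J s n = s n - (\<Sum>j<n. smul F J (hip F J (s n) (gs F J s j)) (?u j))"
      by (simp add: gres_def)
    then have "hip F J (gres F J s n) (?u i) =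
       hip F J (s n) (?u i) - (if i < n \<and> ?u i \<noteq> 0 then hip F J (s n) (gs F J s i) else 0)"
      by (simp only: hip_diff1, subst hip_comb[OF u]) auto
    then have "hip F J (gres F J s n) (gs F J s i) = 0" using i by auto
    then show ?thesis by (simp add: gs_eq[of F J s n] nrm_def hip_scaleR1)
  qed
  show ?case
  proof (intro allI impI)
    fix i j assume "i < Suc n" "j < Suc n" "i \<noteq> j"
    then consider "i < n" "j < n" | "i = n" "j < n" | "j = n" "i < n" by linarith
    then show "hip F J (gs F J s i) (gs F J s j) = 0"
    proof cases
      case 1 then show ?thesis using Suc.IH \<open>i \<noteq> j\<close> by blast
    next
      case 2 then show ?thesis using new by simp
    next
      case 3 then show ?thesis using new[of i] hip_sym[of "gs F J s i" "gs F J s n"] by simp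
    qed
  qed
qed

lemma gs_onz: "onz F J (gs F J s)"
  unfolding onz_def
proof (intro conjI allI impI)
  fix i j :: nat assume "i \<noteq> j"
  then show "hip F J (gs F J s i) (gs F J s j) = 0"
    using gs_orth_aux[of "Suc (max i j)" s] by auto
qed (simp add: gs_eq norm_nrm)

definition gsc where
  "gsc s n i = (if i < n then hip F J (s n) (gs F J s i) else complex_of_real (norm (gres F J s n)))"

lemma gsc_scal: "gsc s n i \<in> scal F"
  by (simp add: gsc_def)

lemma gs_span: "s n = (\<Sum>i<Suc n. smul F J (gsc s n i) (gs F J s i))"
proof -
  have "s n = gres F J s n + (\<Sum>i<n. smul F J (hip F J (s n) (gs F J s i)) (gs F J s i))"
    by (simp add: gres_def)
  also have "gres F J s n = smul F J (gsc s n n) (gs F J s n)"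
    by (simp add: gsc_def gs_eq nrm_scale)
  also have "(\<Sum>i<n. smul F J (hip F J (s n) (gs F J s i)) (gs F J s i)) =
     (\<Sum>i<n. smul F J (gsc s n i) (gs F J s i))"
    by (rule sum.cong) (auto simp: gsc_def)
  finally show ?thesis by (simp add: add.commute)
qed

lemma gs_perp:
  assumes "\<And>i. hip F J x (gs F J s i) = 0"
  shows "hip F J x (s n) = 0"
  by (subst gs_span[of s n], subst hip_comb2[OF gs_onz]) (auto simp: gsc_scal assms)

end

lemma gs_real_span: "gs Real_field J s n \<in> span (s ` {..n})"
proof (induction n rule: less_induct)
  case (less n)
  have "gres Real_field J s n \<in> span (s ` {..n})"
    unfolding gres_def
  proof (rule span_diff)
    show "s n \<in> span (s ` {..n})" by (rule span_base) auto
    show "(\<Sum>i<n. smul Real_field J (hip Real_field J (s n) (gs Real_field J s i)) (gs Real_field J s i))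
       \<in> span (s ` {..n})"
    proof (rule span_sum)
      fix i assume i: "i \<in> {..<n}"
      have "gs Real_field J s i \<in> span (s ` {..n})"
      proof -
        have "s ` {..i} \<subseteq> s ` {..n}" using i by auto
        then show ?thesis using less[of i] i span_mono[of "s ` {..i}" "s ` {..n}"] by auto
      qed
      then show "smul Real_field J (hip Real_field J (s n) (gs Real_field J s i)) (gs Real_field J s i)
        \<in> span (s ` {..n})"
        by (simp add: smul_def span_scale)
    qed
  qed
  then show ?case by (simp add: gs_eq nrm_def span_scale)
qed


lemma l2_add: "a \<in> l2_seqs \<Longrightarrow> b \<in> l2_seqs \<Longrightarrow> (\<lambda>j. a j + b j) \<in> l2_seqs"
  unfolding l2_seqs_def
proof (simp, rule summable_comparison_test)
  assume "summable (\<lambda>j. (a j)\<^sup>2)" "summable (\<lambda>j. (b j)\<^sup>2)"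
  then show "summable (\<lambda>j. 2 * (a j)\<^sup>2 + 2 * (b j)\<^sup>2)" by (intro summable_add summable_mult)
  show "\<exists>N. \<forall>n\<ge>N. norm ((a n + b n)\<^sup>2) \<le> 2 * (a n)\<^sup>2 + 2 * (b n)\<^sup>2"
  proof (intro exI[of _ 0] allI impI)
    fix n :: nat
    have "0 \<le> (a n - b n)\<^sup>2" by simp
    then show "norm ((a n + b n)\<^sup>2) \<le> 2 * (a n)\<^sup>2 + 2 * (b n)\<^sup>2"
    proof -
      have "0 \<le> (a n + b n)\<^sup>2" by simp
      then show ?thesis using \<open>0 \<le> (a n - b n)\<^sup>2\<close>
        by (simp only: real_norm_def abs_of_nonneg power2_diff power2_sum)
    qed
  qed
qed

lemma l2_scale: "a \<in> l2_seqs \<Longrightarrow> (\<lambda>j. c * a j) \<in> l2_seqs"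
  unfolding l2_seqs_def by (simp add: power_mult_distrib summable_mult)

lemma l2_minus: "a \<in> l2_seqs \<Longrightarrow> (\<lambda>j. - a j) \<in> l2_seqs"
  unfolding l2_seqs_def by simp

lemma l2_diff: "a \<in> l2_seqs \<Longrightarrow> b \<in> l2_seqs \<Longrightarrow> (\<lambda>j. a j - b j) \<in> l2_seqs"
  using l2_add[OF _ l2_minus, of a b] by simp

lemma l2_comb: fixes N :: nat shows "(\<And>k. k < N \<Longrightarrow> v k \<in> l2_seqs) \<Longrightarrow> (\<lambda>j. \<Sum>k<N. c k * v k j) \<in> l2_seqs"
proof (induction N)
  case 0 then show ?case by (simp add: l2_seqs_def)
next
  case (Suc N)
  then show ?case using l2_add[OF Suc.IH l2_scale[OF Suc.prems[of N]], of "c N"] by simp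
qed

lemma span_image_sum:
  assumes "x \<in> span (s ` A)" "finite A"
  shows "\<exists>d. x = (\<Sum>k\<in>A. d k *\<^sub>R s k)"
  using assms(1)
proof (induction rule: span_induct_alt)
  case base then show ?case by (intro exI[of _ "\<lambda>_. 0"]) simp
next
  case (step c x y)
  then obtain d where d: "y = (\<Sum>k\<in>A. d k *\<^sub>R s k)" by blast
  from step obtain k0 where k0: "k0 \<in> A" "x = s k0" by blast
  have "c *\<^sub>R x + y = (\<Sum>k\<in>A. (if k = k0 then c else 0) *\<^sub>R s k) + (\<Sum>k\<in>A. d k *\<^sub>R s k)"
    using k0 assms(2) by (simp add: d if_distrib[of "\<lambda>t. t *\<^sub>R _"] sum.delta' cong: if_cong)
  also have "\<dots> = (\<Sum>k\<in>A. ((if k = k0 then c else 0) + d k) *\<^sub>R s k)"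
    by (simp add: sum.distrib scaleR_add_left)
  finally have eq: "c *\<^sub>R x + y = (\<Sum>k\<in>A. ((if k = k0 then c else 0) + d k) *\<^sub>R s k)" .
  show ?case by (rule exI[of _ "\<lambda>k. (if k = k0 then c else 0) + d k"]) (simp add: eq)
qed

lemma hipR: "hip Real_field J x y = complex_of_real (inner x y)"
  by (simp add: hip_def)


context hsp begin

lemma onb_unit: "orthonormal_basis F J e \<Longrightarrow> norm (e i) = 1"
  using onb_onz[of e] onb_nz[of e i] unfolding onz_def by blast

lemma onb_R: assumes e: "orthonormal_basis F J e" shows "onz Real_field J e"
proof -
  have "hip Real_field J (e i) (e j) = 0" if "i \<noteq> j" for i j
  proof -
    have "hip F J (e i) (e j) = 0" using e that by (simp add: orthonormal_basis_def)
    then have "inner (e i) (e j) = 0" by (metis hip_Re zero_complex.sel(1))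
    then show ?thesis by (simp add: hipR)
  qed
  then show ?thesis using onb_unit[OF e] by (simp add: onz_def)
qed

lemma hip_le_norm: "norm y = 1 \<Longrightarrow> cmod (hip F J x y) \<le> norm x"
  using hip_bound[of x y] by simp

definition diag where "diag e a x = psi F J e (\<lambda>j. complex_of_real (a j) * hip F J x (e j))"

lemma diag_props:
  assumes e: "orthonormal_basis F J e" and aM: "\<And>j. \<bar>a j\<bar> \<le> M"
  shows "\<And>x i. hip F J (diag e a x) (e i) = of_real (a i) * hip F J x (e i)"
    "\<And>x. (\<lambda>j. (cmod (of_real (a j) * hip F J x (e j)))\<^sup>2) sums (norm (diag e a x))\<^sup>2"
    "\<And>x. norm (diag e a x) \<le> norm x * M"
    "bounded_op F J (diag e a)"
    "self_adjoint_op F J (diag e a)"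
    "\<And>j. diag e a (e j) = a j *\<^sub>R e j"
proof -
  have u: "onz F J e" by (rule onb_onz[OF e])
  have M0: "0 \<le> M" using aM[of 0] by linarith
  have aM2: "(a j)\<^sup>2 \<le> M\<^sup>2" for j using abs_le_square_iff[of "a j" M] aM[of j] M0 by simp
  have cs: "complex_of_real (a j) * hip F J x (e j) \<in> scal F" for x j by (simp add: scal_mult)
  have sm: "summable (\<lambda>j. (cmod (complex_of_real (a j) * hip F J x (e j)))\<^sup>2)" for x
  proof (rule summable_comparison_test)
    show "summable (\<lambda>j. M\<^sup>2 * (cmod (hip F J x (e j)))\<^sup>2)"
      by (intro summable_mult bessel(1)[OF u])
    show "\<exists>N. \<forall>n\<ge>N. norm ((cmod (complex_of_real (a n) * hip F J x (e n)))\<^sup>2) \<le> M\<^sup>2 * (cmod (hip F J x (e n)))\<^sup>2"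
      using aM2 by (auto simp: norm_mult power_mult_distrib intro!: mult_right_mono)
  qed
  show coef: "hip F J (diag e a x) (e i) = of_real (a i) * hip F J x (e i)" for x i
    unfolding diag_def by (subst psi_coef[OF u cs sm]) (auto simp: onb_nz[OF e])
  show nsum: "(\<lambda>j. (cmod (of_real (a j) * hip F J x (e j)))\<^sup>2) sums (norm (diag e a x))\<^sup>2" for x
    using psi_norm[OF u cs sm, of x] onb_nz[OF e] unfolding diag_def by simp
  show nb: "norm (diag e a x) \<le> norm x * M" for x
  proof -
    have "(norm (diag e a x))\<^sup>2 \<le> M\<^sup>2 * (norm x)\<^sup>2"
    proof -
      have "(norm (diag e a x))\<^sup>2 = (\<Sum>j. (cmod (of_real (a j) * hip F J x (e j)))\<^sup>2)"
        using nsum[of x] by (simp add: sums_iff)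
      also have "\<dots> \<le> (\<Sum>j. M\<^sup>2 * (cmod (hip F J x (e j)))\<^sup>2)"
        using sm[of x] parseval[OF e, of x] aM2
        by (intro suminf_le) (auto simp: norm_mult power_mult_distrib sums_iff intro!: mult_right_mono
            summable_mult)
      also have "\<dots> = M\<^sup>2 * (norm x)\<^sup>2"
        using parseval[OF e, of x] by (simp add: sums_iff suminf_mult)
      finally show ?thesis .
    qed
    moreover have "(norm x * M)\<^sup>2 = M\<^sup>2 * (norm x)\<^sup>2" by (simp add: power_mult_distrib)
    ultimately have "(norm (diag e a x))\<^sup>2 \<le> (norm x * M)\<^sup>2" by simp
    moreover have "0 \<le> norm x * M" using M0 by simp
    ultimately show ?thesis by (rule power2_le_imp_le)
  qed
  have add: "diag e a (x + y) = diag e a x + diag e a y" for x y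
  proof -
    have "hip F J (diag e a (x + y) - (diag e a x + diag e a y)) (e i) = 0" for i
      by (simp only: hip_diff1 hip_add1 coef) (simp add: algebra_simps)
    then have "diag e a (x + y) - (diag e a x + diag e a y) = 0" using onb_complete[OF e] by blast
    then show ?thesis by simp
  qed
  have sm1: "diag e a (smul F J c x) = smul F J c (diag e a x)" if c: "c \<in> scal F" for c x
  proof -
    have "hip F J (diag e a (smul F J c x) - smul F J c (diag e a x)) (e i) = 0" for i
      by (simp only: hip_diff1 hip_smul1[OF c] coef) (simp add: algebra_simps)
    then have "diag e a (smul F J c x) - smul F J c (diag e a x) = 0" using onb_complete[OF e] by blast
    then show ?thesis by simp
  qed
  have bl: "bounded_linear (diag e a)"
  proof (rule bounded_linear_intro[where K=M])
    show "diag e a (r *\<^sub>R x) = r *\<^sub>R diag e a x" for r x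
      using sm1[of "of_real r" x] by simp
  qed (auto simp: add nb)
  show "bounded_op F J (diag e a)"
    unfolding bounded_op_def using bl sm1 by blast
  show "self_adjoint_op F J (diag e a)"
    unfolding self_adjoint_op_def
  proof (intro allI)
    fix x y
    have 1: "(\<lambda>j. hip F J (diag e a x) (e j) * cnj (hip F J y (e j))) sums hip F J (diag e a x) y"
      by (rule parseval2[OF e])
    have 2: "(\<lambda>j. hip F J x (e j) * cnj (hip F J (diag e a y) (e j))) sums hip F J x (diag e a y)"
      by (rule parseval2[OF e])
    have "(\<lambda>j. hip F J (diag e a x) (e j) * cnj (hip F J y (e j))) =
        (\<lambda>j. hip F J x (e j) * cnj (hip F J (diag e a y) (e j)))"
      by (simp add: coef mult_ac)
    with 1 2 show "hip F J (diag e a x) y = hip F J x (diag e a y)"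
      by (metis sums_unique2)
  qed
  show "diag e a (e j) = a j *\<^sub>R e j" for j
  proof -
    have "hip F J (diag e a (e j) - a j *\<^sub>R e j) (e i) = 0" for i
    proof -
      have "hip F J (e j) (e i) = (if j = i then 1 else 0)" using e unfolding orthonormal_basis_def by blast
      then show ?thesis by (simp only: hip_diff1 hip_scaleR1 coef) simp
    qed
    then have "diag e a (e j) - a j *\<^sub>R e j = 0" using onb_complete[OF e] by blast
    then show ?thesis by simp
  qed
qed

end


lemma hsp_R: "hsp Real_field J"
  by unfold_locales (simp add: admissible_def)

context hsp begin

lemma inj_imp_span:
  assumes inj: "injective_family F J X" and e: "orthonormal_basis F J e"
  shows "l2_closed_span (\<lambda>k j. (cmod (hip F J (X k) (e j)))\<^sup>2) = l2_seqs"
proof -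
  interpret R: hsp Real_field J by (rule hsp_R)
  define v where "v k j = (cmod (hip F J (X k) (e j)))\<^sup>2" for k j
  have u: "onz F J e" by (rule onb_onz[OF e])
  have eR: "onz Real_field J e" by (rule onb_R[OF e])
  have en: "norm (e j) = 1" for j by (rule onb_unit[OF e])
  have vl2: "v k \<in> l2_seqs" for k
    unfolding l2_seqs_def
  proof (simp, rule summable_comparison_test)
    show "summable (\<lambda>j. (norm (X k))\<^sup>2 * (cmod (hip F J (X k) (e j)))\<^sup>2)"
      by (intro summable_mult bessel(1)[OF u])
    show "\<exists>N. \<forall>n\<ge>N. norm ((v k n)\<^sup>2) \<le> (norm (X k))\<^sup>2 * (cmod (hip F J (X k) (e n)))\<^sup>2"
    proof (intro exI[of _ 0] allI impI)
      fix n :: nat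
      have "cmod (hip F J (X k) (e n)) \<le> norm (X k)" using hip_le_norm[OF en] .
      then have "(cmod (hip F J (X k) (e n)))\<^sup>2 \<le> (norm (X k))\<^sup>2" by (simp add: power_mono)
      then show "norm ((v k n)\<^sup>2) \<le> (norm (X k))\<^sup>2 * (cmod (hip F J (X k) (e n)))\<^sup>2"
        unfolding v_def by (simp add: power2_eq_square mult_right_mono)
    qed
  qed
  define Phi where "Phi a = psi Real_field J e (\<lambda>j. complex_of_real (a j))" for a
  have Phi_sums: "(\<lambda>j. a j *\<^sub>R e j) sums Phi a" if "a \<in> l2_seqs" for a
    using R.psi_sums[OF eR, of "\<lambda>j. complex_of_real (a j)"] that
    by (simp add: Phi_def l2_seqs_def)
  have Phi_norm: "(\<lambda>j. (a j)\<^sup>2) sums (norm (Phi a))\<^sup>2" if "a \<in> l2_seqs" for a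
    using R.psi_norm[OF eR, of "\<lambda>j. complex_of_real (a j)"] that onb_nz[OF e]
    by (simp add: Phi_def l2_seqs_def)
  have Phi_inner: "(\<lambda>j. a j * inner y (e j)) sums inner y (Phi a)" if "a \<in> l2_seqs" for a y
  proof -
    have "(\<lambda>n. \<Sum>j<n. a j *\<^sub>R e j) \<longlonglongrightarrow> Phi a" using Phi_sums[OF that] by (simp add: sums_def)
    then have "(\<lambda>n. inner y (\<Sum>j<n. a j *\<^sub>R e j)) \<longlonglongrightarrow> inner y (Phi a)"
      by (intro tendsto_intros)
    then show ?thesis by (simp add: sums_def inner_sum_right)
  qed
  have Phi_comb: "Phi (\<lambda>j. \<Sum>k<N. d k * w k j) = (\<Sum>k<N. d k *\<^sub>R Phi (w k))"
    if "\<And>k. k < N \<Longrightarrow> w k \<in> l2_seqs" for N :: nat and d w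
  proof -
    have "(\<lambda>j. (\<Sum>k<N. d k * w k j) *\<^sub>R e j) sums Phi (\<lambda>j. \<Sum>k<N. d k * w k j)"
      by (rule Phi_sums[OF l2_comb[OF that]])
    moreover have "(\<lambda>j. (\<Sum>k<N. d k * w k j) *\<^sub>R e j) sums (\<Sum>k<N. d k *\<^sub>R Phi (w k))"
    proof -
      have "(\<lambda>j. \<Sum>k<N. d k *\<^sub>R (w k j *\<^sub>R e j)) sums (\<Sum>k<N. d k *\<^sub>R Phi (w k))"
        by (intro sums_sum sums_scaleR_right Phi_sums that) auto
      then show ?thesis by (simp add: scaleR_sum_left)
    qed
    ultimately show ?thesis by (rule sums_unique2)
  qed
  have Phi_diff: "Phi (\<lambda>j. a j - b j) = Phi a - Phi b" if "a \<in> l2_seqs" "b \<in> l2_seqs" for a b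
  proof -
    have "(\<lambda>j. (a j - b j) *\<^sub>R e j) sums (Phi a - Phi b)"
      using sums_diff[OF Phi_sums[OF that(1)] Phi_sums[OF that(2)]] by (simp add: scaleR_diff_left)
    with Phi_sums[OF l2_diff[OF that]] show ?thesis by (rule sums_unique2)
  qed
  define s where "s k = Phi (v k)" for k
  define g where "g = gs Real_field J s"
  have gR: "onz Real_field J g" unfolding g_def by (rule R.gs_onz)
  have "l2_seqs \<subseteq> l2_closed_span v"
  proof
    fix b assume b: "b \<in> l2_seqs"
    define y0 where "y0 = Phi b"
    define c where "c i = hip Real_field J y0 (g i)" for i
    have cs: "c i \<in> scal Real_field" for i unfolding c_def by (rule R.hip_scal)
    have csum: "summable (\<lambda>i. (cmod (c i))\<^sup>2)" unfolding c_def by (rule R.bessel(1)[OF gR])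
    define z where "z = y0 - psi Real_field J g c"
    have zg: "hip Real_field J z (g i) = 0" for i
      unfolding z_def c_def by (rule R.proj_orth[OF gR])
    have zs: "inner z (s k) = 0" for k
      using R.gs_perp[of z s k] zg by (simp add: g_def hipR)
    define a where "a j = inner z (e j)" for j
    have aM: "\<bar>a j\<bar> \<le> norm z" for j
      unfolding a_def using Cauchy_Schwarz_ineq2[of z "e j"] en[of j] by simp
    have aorth: "(\<lambda>j. v k j * a j) sums 0" for k
      using Phi_inner[OF vl2, of k z] zs[of k] by (simp add: a_def s_def)
    define T where "T = diag e a"
    note dp = diag_props[OF e aM]
    have quad: "hip F J (T (X k)) (X k) = 0" for k
    proof -
      have "(\<lambda>j. hip F J (T (X k)) (e j) * cnj (hip F J (X k) (e j))) sums hip F J (T (X k)) (X k)"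
        by (rule parseval2[OF e])
      moreover have "(\<lambda>j. hip F J (T (X k)) (e j) * cnj (hip F J (X k) (e j))) =
          (\<lambda>j. complex_of_real (v k j * a j))"
        by (auto simp: T_def dp(1) v_def mult.assoc complex_mult_cnj cmod_power2 mult.commute)
      moreover have "(\<lambda>j. complex_of_real (v k j * a j)) sums 0"
        using sums_of_real[OF aorth[of k]] by simp
      ultimately show ?thesis by (metis sums_unique2)
    qed
    have HS: "hilbert_schmidt F J T"
      unfolding hilbert_schmidt_def
    proof (intro conjI exI[of _ e])
      show "bounded_op F J T" unfolding T_def by (rule dp(4))
      show "orthonormal_basis F J e" by (rule e)
      have "summable (\<lambda>j. (a j)\<^sup>2)"
        using R.bessel(1)[OF eR, of z] by (simp add: a_def hipR)
      then show "summable (\<lambda>j. (norm (T (e j)))\<^sup>2)"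
        by (simp add: T_def dp(6) en power_mult_distrib)
    qed
    have SA: "self_adjoint_op F J T" unfolding T_def by (rule dp(5))
    from inj HS SA quad have T0: "T x = 0" for x
      unfolding injective_family_def by blast
    have a0: "a j = 0" for j
      using T0[of "e j"] onb_nz[OF e, of j] by (simp add: T_def dp(6))
    have "inner z y0 = 0"
      using Phi_inner[OF b, of z] by (simp add: a0[unfolded a_def] y0_def sums_0 sums_unique2)
    moreover have "inner z (psi Real_field J g c) = 0"
    proof -
      have "(\<lambda>i. cnj (c i) * hip Real_field J z (g i)) sums hip Real_field J z (psi Real_field J g c)"
        by (rule R.psi_hip2_sums[OF gR cs csum])
      then have "hip Real_field J z (psi Real_field J g c) = 0"
        by (simp add: zg sums_unique2)
      then show ?thesis by (simp add: hipR)
    qed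
    ultimately have "inner z z = 0" by (simp add: z_def inner_diff_right)
    then have z0: "z = 0" by simp
    have lim: "(\<lambda>n. \<Sum>i<n. smul Real_field J (c i) (g i)) \<longlonglongrightarrow> y0"
      using R.psi_sums[OF gR cs csum] z0 by (auto simp: z_def sums_def)
    show "b \<in> l2_closed_span v"
      unfolding l2_closed_span_def
    proof (intro CollectI conjI b allI impI)
      fix eps :: real assume eps: "eps > 0"
      from lim[unfolded LIMSEQ_iff] eps obtain n where
        n: "norm ((\<Sum>i<n. smul Real_field J (c i) (g i)) - y0) < eps" by blast
      define w where "w = (\<Sum>i<n. smul Real_field J (c i) (g i))"
      have "w \<in> span (s ` {..<n})"
        unfolding w_def
      proof (rule span_sum)
        fix i assume i: "i \<in> {..<n}"
        have "g i \<in> span (s ` {..i})" unfolding g_def by (rule gs_real_span)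
        moreover have "s ` {..i} \<subseteq> s ` {..<n}" using i by auto
        ultimately have "g i \<in> span (s ` {..<n})" using span_mono by blast
        then show "smul Real_field J (c i) (g i) \<in> span (s ` {..<n})"
          by (simp add: smul_def span_scale)
      qed
      then obtain d where d: "w = (\<Sum>k\<in>{..<n}. d k *\<^sub>R s k)"
        using span_image_sum[of w s "{..<n}"] by blast
      have wphi: "w = Phi (\<lambda>j. \<Sum>k<n. d k * v k j)"
        using Phi_comb[of n v d] vl2 by (simp add: d s_def)
      have cl2: "(\<lambda>j. \<Sum>k<n. d k * v k j) \<in> l2_seqs" by (rule l2_comb) (rule vl2)
      have "y0 - w = Phi (\<lambda>j. b j - (\<Sum>k<n. d k * v k j))"
        using Phi_diff[OF b cl2] by (simp add: wphi y0_def)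
      then have "(\<lambda>j. (b j - (\<Sum>k<n. d k * v k j))\<^sup>2) sums (norm (y0 - w))\<^sup>2"
        using Phi_norm[OF l2_diff[OF b cl2]] by simp
      then have "l2_norm (\<lambda>j. b j - (\<Sum>k<n. d k * v k j)) = norm (y0 - w)"
        unfolding l2_norm_def by (simp add: sums_iff)
      also have "\<dots> < eps" using n by (simp add: w_def norm_minus_commute)
      finally show "\<exists>N c. (\<lambda>j. \<Sum>k<N. c k * v k j) \<in> l2_seqs \<and>
          l2_norm (\<lambda>j. b j - (\<Sum>k<N. c k * v k j)) < eps"
        using cl2 by blast
    qed
  qed
  moreover have "l2_closed_span v \<subseteq> l2_seqs" unfolding l2_closed_span_def by blast
  ultimately show ?thesis unfolding v_def[abs_def] by blast
qed

end


fun Cset :: "scalar_field \<Rightarrow> ('a::real_inner \<Rightarrow> 'a) \<Rightarrow> (nat \<Rightarrow> 'a) \<Rightarrow> nat \<Rightarrow> 'a set" where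
  "Cset F J v 0 = {0}"
| "Cset F J v (Suc N) = {a + b | a b. a \<in> Cset F J v N \<and> b \<in> (\<lambda>d. smul F J d (v N)) ` (scal F \<inter> cball 0 1)}"

context hsp begin

lemma smul_cont: "continuous_on S (\<lambda>d. smul F J d v)"
  by (cases F) (auto simp: smul_def intro!: continuous_intros)

lemma compact_scal_ball: "compact (scal F \<inter> cball 0 1)"
proof -
  have "closed (scal F)" by (cases F) (auto simp: closed_complex_Reals)
  then show ?thesis by (subst Int_commute, intro compact_Int_closed) auto
qed

lemma Cset_compact: "compact (Cset F J v N)"
proof (induction N)
  case 0 then show ?case by simp
next
  case (Suc N)
  have "compact ((\<lambda>d. smul F J d (v N)) ` (scal F \<inter> cball 0 1))"
    by (rule compact_continuous_image[OF smul_cont compact_scal_ball])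
  with Suc show ?case by (simp add: compact_sums)
qed

lemma Cset_mem:
  assumes "\<And>j. j < N \<Longrightarrow> d j \<in> scal F \<and> cmod (d j) \<le> 1"
  shows "(\<Sum>j<N. smul F J (d j) (v j)) \<in> Cset F J v N"
  using assms
proof (induction N)
  case 0 then show ?case by simp
next
  case (Suc N)
  have a: "(\<Sum>j<N. smul F J (d j) (v j)) \<in> Cset F J v N" using Suc by auto
  have "d N \<in> scal F \<inter> cball 0 1" using Suc.prems[of N] by auto
  then have b: "smul F J (d N) (v N) \<in> (\<lambda>d. smul F J d (v N)) ` (scal F \<inter> cball 0 1)" by blast
  show ?case using a b by auto
qed

lemma hs_tb:
  assumes T: "bounded_op F J T" and e: "orthonormal_basis F J e"
    and hs: "summable (\<lambda>j. (norm (T (e j)))\<^sup>2)" and eps: "eps > 0"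
  shows "\<exists>k. finite k \<and> T ` cball 0 1 \<subseteq> (\<Union>c\<in>k. ball c eps)"
proof -
  have bl: "bounded_linear T" and Ts: "\<And>c y. c \<in> scal F \<Longrightarrow> T (smul F J c y) = smul F J c (T y)"
    using T unfolding bounded_op_def by auto
  have u: "onz F J e" by (rule onb_onz[OF e])
  define t where "t j = (norm (T (e j)))\<^sup>2" for j
  define del where "del = (eps / 4)\<^sup>2"
  have del: "del > 0" using eps by (simp add: del_def)
  obtain N where N: "norm (\<Sum>i. t (i + N)) < del"
    using suminf_exist_split[OF del hs] unfolding t_def by blast
  have tnn: "t j \<ge> 0" for j by (simp add: t_def)
  have tail: "sum t {N..<M} \<le> del" for M
  proof -
    have "sum t {N..<M} = (\<Sum>i<M - N. t (i + N))"
      by (rule sum.reindex_bij_witness[of _ "\<lambda>i. i + N" "\<lambda>j. j - N"]) auto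
    also have "\<dots> \<le> (\<Sum>i. t (i + N))"
      by (rule sum_le_suminf) (auto simp: tnn hs[folded t_def])
    also have "\<dots> \<le> del" using N by simp
    finally show ?thesis .
  qed
  obtain k where k: "finite k" "Cset F J (\<lambda>j. T (e j)) N \<subseteq> (\<Union>c\<in>k. ball c (eps / 2))"
    using Cset_compact[of "\<lambda>j. T (e j)" N] eps
    unfolding compact_eq_totally_bounded by (meson half_gt_zero)
  show ?thesis
  proof (intro exI[of _ k] conjI k(1) subsetI)
    fix z assume "z \<in> T ` cball 0 1"
    then obtain y where y: "norm y \<le> 1" "z = T y" by auto
    define c where "c j = hip F J y (e j)" for j
    have cs: "c j \<in> scal F" for j by (simp add: c_def)
    have csum: "summable (\<lambda>j. (cmod (c j))\<^sup>2)" unfolding c_def by (rule bessel(1)[OF u])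
    have c1: "(\<Sum>j<M. (cmod (c j))\<^sup>2) \<le> 1" for M
    proof -
      have "(\<Sum>j<M. (cmod (c j))\<^sup>2) \<le> (norm y)\<^sup>2"
        unfolding c_def by (rule bessel_fin[OF u])
      also have "\<dots> \<le> 1" using y(1) by (simp add: power_le_one)
      finally show ?thesis .
    qed
    have cb: "cmod (c j) \<le> 1" for j
    proof -
      have "(cmod (c j))\<^sup>2 \<le> (\<Sum>j<Suc j. (cmod (c j))\<^sup>2)"
        by (rule member_le_sum) auto
      then have "(cmod (c j))\<^sup>2 \<le> 1" using c1[of "Suc j"] by linarith
      then show ?thesis using abs_square_le_1[of "cmod (c j)"] by simp
    qed
    have lim: "(\<lambda>M. \<Sum>j<M. smul F J (c j) (T (e j))) \<longlonglongrightarrow> T y"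
    proof -
      have "(\<lambda>M. \<Sum>j<M. smul F J (c j) (e j)) \<longlonglongrightarrow> y"
        using psi_sums[OF u cs csum] onb_expand[OF e, of y] by (simp add: sums_def c_def)
      then have "(\<lambda>M. T (\<Sum>j<M. smul F J (c j) (e j))) \<longlonglongrightarrow> T y"
        by (rule bounded_linear.tendsto[OF bl])
      moreover have "T (\<Sum>j<M. smul F J (c j) (e j)) = (\<Sum>j<M. smul F J (c j) (T (e j)))" for M
        by (simp add: linear_sum[OF bounded_linear.linear[OF bl]] Ts cs)
      ultimately show ?thesis by simp
    qed
    define zN where "zN = (\<Sum>j<N. smul F J (c j) (T (e j)))"
    have zNC: "zN \<in> Cset F J (\<lambda>j. T (e j)) N"
      unfolding zN_def by (rule Cset_mem) (auto simp: cs cb)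
    have bnd: "norm ((\<Sum>j<M. smul F J (c j) (T (e j))) - zN) \<le> eps / 4" if M: "M \<ge> N" for M
    proof -
      have "(\<Sum>j<M. smul F J (c j) (T (e j))) - zN = (\<Sum>j\<in>{N..<M}. smul F J (c j) (T (e j)))"
      proof -
        have "(\<Sum>j<M. smul F J (c j) (T (e j))) = (\<Sum>j<N. smul F J (c j) (T (e j))) + (\<Sum>j\<in>{N..<M}. smul F J (c j) (T (e j)))"
          using sum.atLeastLessThan_concat[of 0 N M "\<lambda>j. smul F J (c j) (T (e j))"] M
          by (simp add: atLeast0LessThan)
        then show ?thesis unfolding zN_def by simp
      qed
      also have "norm \<dots> \<le> (\<Sum>j\<in>{N..<M}. cmod (c j) * norm (T (e j)))"
        by (rule order_trans[OF norm_sum]) (simp add: norm_smul cs)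
      also have "\<dots> \<le> eps / 4"
      proof -
        have "(\<Sum>j\<in>{N..<M}. cmod (c j) * norm (T (e j)))\<^sup>2 \<le>
            (\<Sum>j\<in>{N..<M}. (cmod (c j))\<^sup>2) * (\<Sum>j\<in>{N..<M}. (norm (T (e j)))\<^sup>2)"
          by (rule Cauchy_Schwarz_ineq_sum)
        also have "\<dots> \<le> 1 * del"
        proof (rule mult_mono)
          have "(\<Sum>j\<in>{N..<M}. (cmod (c j))\<^sup>2) \<le> (\<Sum>j<M. (cmod (c j))\<^sup>2)"
            by (rule sum_mono2) auto
          then show "(\<Sum>j\<in>{N..<M}. (cmod (c j))\<^sup>2) \<le> 1" using c1[of M] by linarith
          show "(\<Sum>j\<in>{N..<M}. (norm (T (e j)))\<^sup>2) \<le> del" using tail[of M] by (simp add: t_def)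
        qed (auto simp: sum_nonneg)
        also have "\<dots> = (eps / 4)\<^sup>2" by (simp add: del_def)
        finally have "(\<Sum>j\<in>{N..<M}. cmod (c j) * norm (T (e j)))\<^sup>2 \<le> (eps / 4)\<^sup>2" .
        moreover have "0 \<le> eps / 4" using eps by simp
        ultimately show ?thesis by (rule power2_le_imp_le)
      qed
      finally show ?thesis .
    qed
    have "norm (T y - zN) \<le> eps / 4"
    proof (rule LIMSEQ_le_const2)
      show "(\<lambda>M. norm ((\<Sum>j<M. smul F J (c j) (T (e j))) - zN)) \<longlonglongrightarrow> norm (T y - zN)"
        by (intro tendsto_intros lim)
      show "\<exists>N'. \<forall>M\<ge>N'. norm ((\<Sum>j<M. smul F J (c j) (T (e j))) - zN) \<le> eps / 4"
        using bnd by blast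
    qed
    moreover obtain q where q: "q \<in> k" "dist q zN < eps / 2" using k(2) zNC by auto
    ultimately have "dist q z < eps"
    proof -
      assume a1: "norm (T y - zN) \<le> eps / 4"
      have "dist q z \<le> dist q zN + dist zN z" by (rule dist_triangle)
      moreover have "dist zN z = norm (T y - zN)" using y(2) by (simp add: dist_norm norm_minus_commute)
      ultimately show ?thesis using a1 q(2) eps by linarith
    qed
    then show "z \<in> (\<Union>c\<in>k. ball c eps)" using q(1) by auto
  qed
qed

lemma hs_compact:
  fixes x :: "nat \<Rightarrow> 'a"
  assumes T: "bounded_op F J T" and e: "orthonormal_basis F J e"
    and hs: "summable (\<lambda>j. (norm (T (e j)))\<^sup>2)" and x: "\<And>n. norm (x n) \<le> 1"
  shows "\<exists>l r. strict_mono r \<and> ((\<lambda>n. T (x (r n))) \<longlonglongrightarrow> l)"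
proof -
  let ?S = "T ` cball 0 1"
  have "compact (closure ?S)"
    unfolding compact_eq_totally_bounded
  proof (intro conjI allI impI)
    show "complete (closure ?S)" unfolding complete_eq_closed by (rule closed_closure)
    fix eps :: real assume eps: "eps > 0"
    obtain k where k: "finite k" "?S \<subseteq> (\<Union>c\<in>k. ball c (eps / 2))"
      using hs_tb[OF T e hs, of "eps / 2"] eps by (meson half_gt_zero)
    have "(\<Union>c\<in>k. ball c (eps / 2)) \<subseteq> (\<Union>c\<in>k. cball c (eps / 2))"
      by (intro UN_mono) (auto simp: ball_subset_cball)
    then have "?S \<subseteq> (\<Union>c\<in>k. cball c (eps / 2))" using k(2) by (rule subset_trans[rotated])
    moreover have "closed (\<Union>c\<in>k. cball c (eps / 2))" using k(1) by (intro closed_UN) (auto intro: closed_cball)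
    ultimately have "closure ?S \<subseteq> (\<Union>c\<in>k. cball c (eps / 2))" by (rule closure_minimal)
    also have "\<dots> \<subseteq> (\<Union>c\<in>k. ball c eps)"
      using eps by (intro UN_mono) (auto simp: subset_eq)
    finally show "\<exists>k. finite k \<and> closure ?S \<subseteq> (\<Union>c\<in>k. ball c eps)" using k(1) by blast
  qed
  then have "seq_compact (closure ?S)" by (rule compact_imp_seq_compact)
  moreover have "\<forall>n. T (x n) \<in> closure ?S"
  proof
    fix n have "T (x n) \<in> ?S" by (rule imageI) (simp add: x)
    then show "T (x n) \<in> closure ?S" by (rule subsetD[OF closure_subset])
  qed
  ultimately obtain l r where "l \<in> closure ?S" "strict_mono r" "((\<lambda>n. T (x n)) \<circ> r) \<longlonglongrightarrow> l"
    by (rule seq_compactE[of "closure ?S" "\<lambda>n. T (x n)"])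
  then have "strict_mono r \<and> ((\<lambda>n. T (x (r n))) \<longlonglongrightarrow> l)" by (simp add: o_def)
  then show ?thesis by blast
qed

end


lemma norm_diff_scale_sq:
  fixes a c :: "'a::real_inner"
  shows "(norm (c - k *\<^sub>R a))\<^sup>2 = (norm c)\<^sup>2 - 2 * k * inner c a + k\<^sup>2 * (norm a)\<^sup>2"
  unfolding power2_norm_eq_inner
  by (simp add: inner_diff_left inner_diff_right inner_commute[of a c] power2_eq_square algebra_simps)

lemma eig_exists:
  fixes T :: "'a::{real_inner, complete_space} \<Rightarrow> 'a" and W :: "'a set"
  assumes bl: "bounded_linear T"
    and sa: "\<And>x y. inner (T x) y = inner x (T y)"
    and cpt: "\<And>x :: nat \<Rightarrow> 'a. (\<And>n. norm (x n) \<le> 1) \<Longrightarrow> \<exists>l r. strict_mono r \<and> ((\<lambda>n. T (x (r n))) \<longlonglongrightarrow> l)"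
    and Wc: "closed W" and Ws: "subspace W" and TW: "\<And>x. x \<in> W \<Longrightarrow> T x \<in> W"
    and mpos: "m > 0" and bnd: "\<And>x. x \<in> W \<Longrightarrow> norm (T x) \<le> m * norm x"
    and apx: "\<And>eps. eps > 0 \<Longrightarrow> \<exists>x\<in>W. norm x = 1 \<and> norm (T x) > m - eps"
  shows "\<exists>y\<in>W. norm y = 1 \<and> (T y = m *\<^sub>R y \<or> T y = (- m) *\<^sub>R y)"
proof -
  have "\<forall>n. \<exists>x. x \<in> W \<and> norm x = 1 \<and> norm (T x) > m - 1 / real (Suc n)"
    using apx by (metis of_nat_0_less_iff zero_less_Suc zero_less_divide_1_iff)
  then obtain x where x: "\<And>n. x n \<in> W" "\<And>n. norm (x n) = 1" "\<And>n. norm (T (x n)) > m - 1 / real (Suc n)"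
    by metis
  have tn: "(\<lambda>n. norm (T (x n))) \<longlonglongrightarrow> m"
  proof (rule tendsto_sandwich)
    show "\<forall>\<^sub>F n in sequentially. m - 1 / real (Suc n) \<le> norm (T (x n))"
      using x(3) by (intro always_eventually allI) (simp add: less_imp_le)
    show "\<forall>\<^sub>F n in sequentially. norm (T (x n)) \<le> m"
      using bnd[OF x(1)] x(2) by (intro always_eventually allI) simp
    show "(\<lambda>n. m - 1 / real (Suc n)) \<longlonglongrightarrow> m"
      using tendsto_diff[OF tendsto_const[of m] LIMSEQ_inverse_real_of_nat]
      by (simp add: inverse_eq_divide)
  qed auto
  have key: "(norm (T (T (x n)) - m\<^sup>2 *\<^sub>R x n))\<^sup>2 \<le> m\<^sup>2 * (m\<^sup>2 - (norm (T (x n)))\<^sup>2)" for n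
  proof -
    have i: "inner (T (T (x n))) (x n) = (norm (T (x n)))\<^sup>2"
      by (simp add: sa power2_norm_eq_inner)
    have c: "norm (T (T (x n))) \<le> m * norm (T (x n))" by (rule bnd[OF TW[OF x(1)]])
    then have c2: "(norm (T (T (x n))))\<^sup>2 \<le> m\<^sup>2 * (norm (T (x n)))\<^sup>2"
      by (metis norm_ge_zero power_mono power_mult_distrib)
    have "(norm (T (T (x n)) - m\<^sup>2 *\<^sub>R x n))\<^sup>2 =
        (norm (T (T (x n))))\<^sup>2 - 2 * m\<^sup>2 * (norm (T (x n)))\<^sup>2 + (m\<^sup>2)\<^sup>2"
      by (simp add: norm_diff_scale_sq i x(2))
    also have "\<dots> \<le> m\<^sup>2 * (norm (T (x n)))\<^sup>2 - 2 * m\<^sup>2 * (norm (T (x n)))\<^sup>2 + (m\<^sup>2)\<^sup>2"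
      using c2 by linarith
    also have "\<dots> = m\<^sup>2 * (m\<^sup>2 - (norm (T (x n)))\<^sup>2)"
      by (simp add: power2_eq_square algebra_simps)
    finally show ?thesis .
  qed
  have d0: "(\<lambda>n. T (T (x n)) - m\<^sup>2 *\<^sub>R x n) \<longlonglongrightarrow> 0"
  proof -
    have "(\<lambda>n. m\<^sup>2 * (m\<^sup>2 - (norm (T (x n)))\<^sup>2)) \<longlonglongrightarrow> m\<^sup>2 * (m\<^sup>2 - m\<^sup>2)"
      by (intro tendsto_intros tn)
    then have lim0: "(\<lambda>n. m\<^sup>2 * (m\<^sup>2 - (norm (T (x n)))\<^sup>2)) \<longlonglongrightarrow> 0" by simp
    have ev1: "\<forall>\<^sub>F n in sequentially. (0::real) \<le> (norm (T (T (x n)) - m\<^sup>2 *\<^sub>R x n))\<^sup>2"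
      by (rule always_eventually) (simp only: zero_le_power2 simp_thms)
    have ev2: "\<forall>\<^sub>F n in sequentially. (norm (T (T (x n)) - m\<^sup>2 *\<^sub>R x n))\<^sup>2 \<le> m\<^sup>2 * (m\<^sup>2 - (norm (T (x n)))\<^sup>2)"
      by (rule always_eventually) (simp only: key simp_thms)
    have "(\<lambda>n. (norm (T (T (x n)) - m\<^sup>2 *\<^sub>R x n))\<^sup>2) \<longlonglongrightarrow> 0"
      by (rule tendsto_sandwich[OF ev1 ev2 tendsto_const lim0])
    then have "(\<lambda>n. sqrt ((norm (T (T (x n)) - m\<^sup>2 *\<^sub>R x n))\<^sup>2)) \<longlonglongrightarrow> sqrt 0"
      by (intro tendsto_intros)
    then have "(\<lambda>n. norm (T (T (x n)) - m\<^sup>2 *\<^sub>R x n)) \<longlonglongrightarrow> 0" by simp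
    then show ?thesis by (rule tendsto_norm_zero_iff[THEN iffD1])
  qed
  obtain z r where r: "strict_mono r" and z: "(\<lambda>n. T (x (r n))) \<longlonglongrightarrow> z"
    using cpt[of x] x(2) by auto
  have ttz: "(\<lambda>n. T (T (x (r n)))) \<longlonglongrightarrow> T z"
    by (rule bounded_linear.tendsto[OF bl z])
  have d0r: "(\<lambda>n. T (T (x (r n))) - m\<^sup>2 *\<^sub>R x (r n)) \<longlonglongrightarrow> 0"
    using LIMSEQ_subseq_LIMSEQ[OF d0 r] by (simp add: o_def)
  have "(\<lambda>n. T (T (x (r n))) - (T (T (x (r n))) - m\<^sup>2 *\<^sub>R x (r n))) \<longlonglongrightarrow> T z - 0"
    by (intro tendsto_diff ttz d0r)
  then have "(\<lambda>n. m\<^sup>2 *\<^sub>R x (r n)) \<longlonglongrightarrow> T z" by simp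
  then have "(\<lambda>n. inverse (m\<^sup>2) *\<^sub>R (m\<^sup>2 *\<^sub>R x (r n))) \<longlonglongrightarrow> inverse (m\<^sup>2) *\<^sub>R T z"
    by (intro tendsto_intros)
  then have xr: "(\<lambda>n. x (r n)) \<longlonglongrightarrow> inverse (m\<^sup>2) *\<^sub>R T z" using mpos by simp
  define y where "y = inverse (m\<^sup>2) *\<^sub>R T z"
  have yW: "y \<in> W"
    using closed_sequentially[OF Wc _ xr] x(1) by (simp add: y_def)
  have yn: "norm y = 1"
  proof -
    have "(\<lambda>n. norm (x (r n))) \<longlonglongrightarrow> norm y" using xr tendsto_norm by (force simp: y_def)
    then show ?thesis using x(2) by (simp add: LIMSEQ_const_iff)
  qed
  have "(\<lambda>n. T (x (r n))) \<longlonglongrightarrow> T y"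
    using bounded_linear.tendsto[OF bl xr] by (simp add: y_def)
  then have zy: "z = T y" using z LIMSEQ_unique by blast
  have Tz: "T z = m\<^sup>2 *\<^sub>R y" using mpos by (simp add: y_def)
  have TTy: "T (T y) = m\<^sup>2 *\<^sub>R y" using Tz by (simp only: zy)
  define w where "w = T y + m *\<^sub>R y"
  show ?thesis
  proof (cases "w = 0")
    case True
    then have "T y = (- m) *\<^sub>R y" by (simp add: w_def eq_neg_iff_add_eq_0)
    then show ?thesis using yW yn by blast
  next
    case False
    have Tw: "T w = m *\<^sub>R w"
      by (simp add: w_def linear_add[OF bounded_linear.linear[OF bl]] linear_scale[OF bounded_linear.linear[OF bl]] TTy
          scaleR_add_right power2_eq_square algebra_simps)
    have wW: "w \<in> W" unfolding w_def
      by (intro subspace_add[OF Ws] subspace_scale[OF Ws] TW yW)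
    define y' where "y' = nrm w"
    have "y' \<in> W" unfolding y'_def nrm_def by (rule subspace_scale[OF Ws wW])
    moreover have "norm y' = 1" using False by (simp add: y'_def norm_nrm)
    moreover have "T y' = m *\<^sub>R y'"
      by (simp add: y'_def nrm_def linear_scale[OF bounded_linear.linear[OF bl]] Tw)
    ultimately show ?thesis by blast
  qed
qed


definition Wl :: "scalar_field \<Rightarrow> ('a::real_inner \<Rightarrow> 'a) \<Rightarrow> 'a list \<Rightarrow> 'a set" where
  "Wl F J us = {x. \<forall>u\<in>set us. hip F J x u = 0}"

definition ml :: "scalar_field \<Rightarrow> ('a::real_inner \<Rightarrow> 'a) \<Rightarrow> ('a \<Rightarrow> 'a) \<Rightarrow> 'a list \<Rightarrow> real" where
  "ml F J T us = Sup ((\<lambda>x. norm (T x)) ` {x \<in> Wl F J us. norm x \<le> 1})"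

definition nxt :: "scalar_field \<Rightarrow> ('a::real_inner \<Rightarrow> 'a) \<Rightarrow> ('a \<Rightarrow> 'a) \<Rightarrow> 'a list \<Rightarrow> 'a" where
  "nxt F J T us = (if ml F J T us = 0 then 0 else
     (SOME y. y \<in> Wl F J us \<and> norm y = 1 \<and> (T y = ml F J T us *\<^sub>R y \<or> T y = (- ml F J T us) *\<^sub>R y)))"

fun gl :: "scalar_field \<Rightarrow> ('a::real_inner \<Rightarrow> 'a) \<Rightarrow> ('a \<Rightarrow> 'a) \<Rightarrow> nat \<Rightarrow> 'a list" where
  "gl F J T 0 = []"
| "gl F J T (Suc n) = gl F J T n @ [nxt F J T (gl F J T n)]"

definition ev :: "scalar_field \<Rightarrow> ('a::real_inner \<Rightarrow> 'a) \<Rightarrow> ('a \<Rightarrow> 'a) \<Rightarrow> nat \<Rightarrow> 'a" where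
  "ev F J T n = gl F J T (Suc n) ! n"

lemma length_gl[simp]: "length (gl F J T n) = n"
  by (induction n) auto

lemma gl_nth: "i < n \<Longrightarrow> gl F J T n ! i = ev F J T i"
proof (induction n)
  case 0 then show ?case by simp
next
  case (Suc n)
  then show ?case
    by (cases "i < n") (auto simp: nth_append ev_def less_Suc_eq)
qed

lemma ev_eq: "ev F J T n = nxt F J T (gl F J T n)"
  by (simp add: ev_def nth_append)

lemma set_gl: "set (gl F J T n) = ev F J T ` {..<n}"
  by (auto simp: in_set_conv_nth gl_nth image_iff intro: exI[of _ "_"]) (use gl_nth in blast)+

lemma Wl_gl: "Wl F J (gl F J T n) = {x. \<forall>i<n. hip F J x (ev F J T i) = 0}"
  by (auto simp: Wl_def set_gl)

context hsp begin

lemma hs_orth_bound: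
  assumes sa: "self_adjoint_op F J T" and e: "orthonormal_basis F J e"
    and hs: "summable (\<lambda>j. (norm (T (e j)))\<^sup>2)" and u: "onz F J u"
  shows "(\<Sum>n<N. (norm (T (u n)))\<^sup>2) \<le> (\<Sum>j. (norm (T (e j)))\<^sup>2)"
proof -
  have eq: "(cmod (hip F J (T (u n)) (e j)))\<^sup>2 = (cmod (hip F J (T (e j)) (u n)))\<^sup>2" for n j
    using sa unfolding self_adjoint_op_def by (metis complex_mod_cnj hip_sym)
  have sn: "(\<lambda>j. (cmod (hip F J (T (e j)) (u n)))\<^sup>2) sums (norm (T (u n)))\<^sup>2" for n
    using parseval[OF e, of "T (u n)"] by (simp add: eq)
  have "(\<Sum>n<N. (norm (T (u n)))\<^sup>2) = (\<Sum>n<N. \<Sum>j. (cmod (hip F J (T (e j)) (u n)))\<^sup>2)"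
    using sn by (simp add: sums_iff)
  also have "\<dots> = (\<Sum>j. \<Sum>n<N. (cmod (hip F J (T (e j)) (u n)))\<^sup>2)"
    by (rule suminf_sum[symmetric]) (use sn in \<open>auto simp: sums_iff\<close>)
  also have "\<dots> \<le> (\<Sum>j. (norm (T (e j)))\<^sup>2)"
  proof (rule suminf_le)
    show "summable (\<lambda>j. \<Sum>n<N. (cmod (hip F J (T (e j)) (u n)))\<^sup>2)"
      using sn by (intro summable_sum) (auto simp: sums_iff)
    show "summable (\<lambda>j. (norm (T (e j)))\<^sup>2)" by (rule hs)
    show "(\<Sum>n<N. (cmod (hip F J (T (e j)) (u n)))\<^sup>2) \<le> (norm (T (e j)))\<^sup>2" for j
      by (rule bessel_fin[OF u])
  qed
  finally show ?thesis .
qed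

lemma hs_orth_summable:
  assumes sa: "self_adjoint_op F J T" and e: "orthonormal_basis F J e"
    and hs: "summable (\<lambda>j. (norm (T (e j)))\<^sup>2)" and u: "onz F J u"
  shows "summable (\<lambda>n. (norm (T (u n)))\<^sup>2)"
  by (rule summableI_nonneg_bounded[where x="\<Sum>j. (norm (T (e j)))\<^sup>2"])
     (auto intro: hs_orth_bound[OF assms])

end


context hsp begin

lemma greedy:
  assumes T: "bounded_op F J T" and sa: "self_adjoint_op F J T" and e: "orthonormal_basis F J e"
    and hs: "summable (\<lambda>j. (norm (T (e j)))\<^sup>2)"
  shows "\<exists>u lam. onz F J u \<and> (\<forall>n. T (u n) = lam n *\<^sub>R u n) \<and> (\<forall>x. (\<forall>n. hip F J x (u n) = 0) \<longrightarrow> T x = 0)"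
proof -
  have bl: "bounded_linear T" using T unfolding bounded_op_def by auto
  have lin: "linear T" by (rule bounded_linear.linear[OF bl])
  have saR: "inner (T x) y = inner x (T y)" for x y
    using sa unfolding self_adjoint_op_def by (metis hip_Re)
  have cpt: "\<exists>l r. strict_mono r \<and> ((\<lambda>n. T (x (r n))) \<longlonglongrightarrow> l)" if "\<And>n. norm (x n) \<le> 1" for x :: "nat \<Rightarrow> 'a"
    by (rule hs_compact[OF T e hs that])
  obtain K where K: "K > 0" "\<And>x. norm (T x) \<le> norm x * K"
    using bounded_linear.pos_bounded[OF bl] by blast
  define u where "u = ev F J T"
  define Wn where "Wn n = {x. \<forall>i<n. hip F J x (u i) = 0}" for n
  define m where "m n = ml F J T (gl F J T n)" for n
  define S where "S n = (\<lambda>x. norm (T x)) ` {x \<in> Wn n. norm x \<le> 1}" for n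
  have WlW: "Wl F J (gl F J T n) = Wn n" for n by (simp add: Wl_gl Wn_def u_def)
  have mS: "m n = Sup (S n)" for n by (simp add: m_def ml_def WlW S_def)
  have S0: "0 \<in> S n" for n
  proof -
    have "(0::'a) \<in> {x \<in> Wn n. norm x \<le> 1}" by (simp add: Wn_def)
    then have "norm (T 0) \<in> S n" unfolding S_def by (rule imageI)
    then show ?thesis by (simp add: linear_0[OF lin])
  qed
  have Sne: "S n \<noteq> {}" for n using S0 by blast
  have Sbdd: "bdd_above (S n)" for n
  proof (rule bdd_aboveI[where M=K])
    fix t assume "t \<in> S n"
    then obtain x where "norm x \<le> 1" "t = norm (T x)" by (auto simp: S_def)
    then show "t \<le> K" using K(2)[of x] K(1) by (smt (verit) mult_left_le_one_le norm_ge_zero)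
  qed
  have m0: "0 \<le> m n" for n unfolding mS using cSup_upper[OF S0 Sbdd] .
  have Wsub: "subspace (Wn n)" for n
    unfolding subspace_def Wn_def by (auto simp: hip_add1 hip_scaleR1)
  have Wcl: "closed (Wn n)" for n
  proof -
    have "Wn n = (\<Inter>i\<in>{..<n}. {x. hip F J x (u i) = 0})" by (auto simp: Wn_def)
    moreover have "closed {x. hip F J x (u i) = 0}" for i
      by (rule closed_Collect_eq) (auto intro: continuous_on_hip1 continuous_on_const)
    ultimately show ?thesis by auto
  qed
  have mb: "norm (T x) \<le> m n * norm x" if x: "x \<in> Wn n" for x n
  proof (cases "x = 0")
    case True then show ?thesis by (simp add: linear_0[OF lin])
  next
    case False
    define x' where "x' = inverse (norm x) *\<^sub>R x"
    have "x' \<in> Wn n" unfolding x'_def by (rule subspace_scale[OF Wsub x])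
    moreover have "norm x' \<le> 1" using False by (simp add: x'_def)
    ultimately have "norm (T x') \<in> S n" by (auto simp: S_def)
    then have "norm (T x') \<le> m n" unfolding mS by (rule cSup_upper[OF _ Sbdd])
    moreover have "norm (T x') = norm (T x) / norm x"
      using False by (simp add: x'_def linear_scale[OF lin] divide_inverse mult.commute)
    ultimately show ?thesis using False by (simp add: divide_le_eq)
  qed
  have mapx: "\<exists>x\<in>Wn n. norm x = 1 \<and> norm (T x) > m n - eps" if mp: "m n > 0" and eps: "eps > 0" for n eps
  proof -
    define d where "d = min eps (m n / 2)"
    have d: "d > 0" "d \<le> eps" "d \<le> m n / 2" using mp eps by (auto simp: d_def)
    have "m n - d < Sup (S n)" using d by (simp add: mS)
    then obtain t where "t \<in> S n" "m n - d < t" using less_cSupE[OF _ Sne] by blast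
    then obtain x where x: "x \<in> Wn n" "norm x \<le> 1" "m n - d < norm (T x)" by (auto simp: S_def)
    have xnz: "x \<noteq> 0" using x(3) d mp by (auto simp: linear_0[OF lin])
    define x' where "x' = inverse (norm x) *\<^sub>R x"
    have "x' \<in> Wn n" unfolding x'_def by (rule subspace_scale[OF Wsub x(1)])
    moreover have "norm x' = 1" using xnz by (simp add: x'_def)
    moreover have "norm (T x') = norm (T x) / norm x"
      using xnz by (simp add: x'_def linear_scale[OF lin] divide_inverse mult.commute)
    moreover have "norm (T x) / norm x \<ge> norm (T x)"
      using x(2) xnz by (simp add: le_divide_eq mult_right_le_one_le)
    ultimately show ?thesis using x(3) d by (intro bexI[of _ x']) auto
  qed
  define lam where "lam n = (if T (u n) = m n *\<^sub>R u n then m n else - m n)" for n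
  have main: "T (u n) = lam n *\<^sub>R u n \<and> u n \<in> Wn n \<and> (u n = 0 \<or> norm (u n) = 1) \<and> norm (T (u n)) = m n" for n
  proof (induction n rule: less_induct)
    case (less n)
    have TW: "T x \<in> Wn n" if x: "x \<in> Wn n" for x
      unfolding Wn_def
    proof (intro CollectI allI impI)
      fix i assume i: "i < n"
      have "hip F J (T x) (u i) = hip F J x (T (u i))" using sa unfolding self_adjoint_op_def by blast
      also have "\<dots> = hip F J x (lam i *\<^sub>R u i)" using less[OF i] by simp
      also have "\<dots> = 0" using x i by (simp add: hip_scaleR2 Wn_def)
      finally show "hip F J (T x) (u i) = 0" .
    qed
    show ?case
    proof (cases "m n = 0")
      case True
      then have "u n = 0" by (simp add: u_def ev_eq nxt_def m_def)
      then show ?thesis using True by (simp add: Wn_def linear_0[OF lin])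
    next
      case False
      then have mp: "m n > 0" using m0[of n] by simp
      have ex: "\<exists>y\<in>Wn n. norm y = 1 \<and> (T y = m n *\<^sub>R y \<or> T y = (- m n) *\<^sub>R y)"
        by (rule eig_exists[OF bl saR cpt Wcl Wsub TW mp mb mapx[OF mp]]) auto
      have un: "u n = (SOME y. y \<in> Wn n \<and> norm y = 1 \<and> (T y = m n *\<^sub>R y \<or> T y = (- m n) *\<^sub>R y))"
        using False by (simp add: u_def ev_eq nxt_def m_def[symmetric] WlW)
      have P: "u n \<in> Wn n \<and> norm (u n) = 1 \<and> (T (u n) = m n *\<^sub>R u n \<or> T (u n) = (- m n) *\<^sub>R u n)"
        unfolding un by (rule someI_ex) (use ex in blast)
      then have "T (u n) = lam n *\<^sub>R u n" by (auto simp: lam_def)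
      moreover have "norm (T (u n)) = m n" using P m0[of n] by auto
      ultimately show ?thesis using P by blast
    qed
  qed
  have onz: "onz F J u"
    unfolding onz_def
  proof (intro conjI allI impI)
    fix i j :: nat assume ij: "i \<noteq> j"
    show "hip F J (u i) (u j) = 0"
    proof (cases "i < j")
      case True
      then show ?thesis using main[of j] hip_sym[of "u i" "u j"] by (simp add: Wn_def)
    next
      case False
      then have "j < i" using ij by simp
      then show ?thesis using main[of i] by (simp add: Wn_def)
    qed
  next
    fix i show "u i = 0 \<or> norm (u i) = 1" using main by blast
  qed
  have "summable (\<lambda>n. (norm (T (u n)))\<^sup>2)" by (rule hs_orth_summable[OF sa e hs onz])
  moreover have "(\<lambda>n. (norm (T (u n)))\<^sup>2) = (\<lambda>n. (m n)\<^sup>2)"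
  proof
    fix n have "norm (T (u n)) = m n" using main[of n] by blast
    then show "(norm (T (u n)))\<^sup>2 = (m n)\<^sup>2" by (simp only:)
  qed
  ultimately have "summable (\<lambda>n. (m n)\<^sup>2)" by simp
  then have "(\<lambda>n. (m n)\<^sup>2) \<longlonglongrightarrow> 0" by (rule summable_LIMSEQ_zero)
  then have "(\<lambda>n. sqrt ((m n)\<^sup>2)) \<longlonglongrightarrow> sqrt 0" by (intro tendsto_intros)
  then have mlim: "m \<longlonglongrightarrow> 0" using m0 by simp
  have kill: "T x = 0" if x: "\<forall>n. hip F J x (u n) = 0" for x
  proof -
    have "(\<lambda>n. m n * norm x) \<longlonglongrightarrow> 0 * norm x" by (intro tendsto_intros mlim)
    then have "(\<lambda>n. m n * norm x) \<longlonglongrightarrow> 0" by simp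
    then have "norm (T x) \<le> 0"
      by (rule LIMSEQ_le_const) (use mb x in \<open>auto simp: Wn_def\<close>)
    then show ?thesis by simp
  qed
  show ?thesis using onz main kill by blast
qed

end


context hsp begin

lemma eig_onb:
  assumes T: "bounded_op F J T" and sa: "self_adjoint_op F J T" and e: "orthonormal_basis F J e"
    and hs: "summable (\<lambda>j. (norm (T (e j)))\<^sup>2)"
    and sep: "\<exists>D::'a set. countable D \<and> closure D = UNIV"
    and infd: "\<forall>B::'a set. finite B \<longrightarrow> span B \<noteq> UNIV"
  shows "\<exists>f a. orthonormal_basis F J f \<and> (\<forall>k. T (f k) = a k *\<^sub>R f k)"
proof -
  have bl: "bounded_linear T" and Ts: "\<And>c y. c \<in> scal F \<Longrightarrow> T (smul F J c y) = smul F J c (T y)"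
    using T unfolding bounded_op_def by auto
  have lin: "linear T" by (rule bounded_linear.linear[OF bl])
  obtain u lam where u: "onz F J u" and ueig: "\<And>n. T (u n) = lam n *\<^sub>R u n"
    and kill: "\<And>x. (\<forall>n. hip F J x (u n) = 0) \<Longrightarrow> T x = 0"
    using greedy[OF T sa e hs] by blast
  obtain D :: "'a set" where D: "countable D" "closure D = UNIV" using sep by blast
  have Dne: "D \<noteq> {}" using D(2) by auto
  define d where "d = from_nat_into D"
  have rd: "range d = D" unfolding d_def using D(1) Dne by simp
  define P where "P y = psi F J u (\<lambda>i. hip F J y (u i))" for y
  define d' where "d' n = d n - P (d n)" for n
  have hd': "hip F J (d' n) (u i) = 0" for n i unfolding d'_def P_def by (rule proj_orth[OF u])
  have Td': "T (d' n) = 0" for n using kill hd' by blast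
  define s where "s k = (if even k then u (k div 2) else d' (k div 2))" for k
  define f0 where "f0 = gs F J s"
  have f0z: "onz F J f0" unfolding f0_def by (rule gs_onz)
  have Q: "(even m \<longrightarrow> f0 m = u (m div 2)) \<and> (odd m \<longrightarrow> T (f0 m) = 0 \<and> (\<forall>k. hip F J (f0 m) (u k) = 0))" for m
  proof (induction m rule: less_induct)
    case (less m)
    have fm: "f0 m = nrm (s m - (\<Sum>i<m. smul F J (hip F J (s m) (f0 i)) (f0 i)))"
      unfolding f0_def by (subst gs_eq) (simp only: gres_def)
    show ?case
    proof (cases "even m")
      case True
      define n where "n = m div 2"
      have sm: "s m = u n" using True by (simp add: s_def n_def)
      have z: "hip F J (u n) (f0 i) = 0" if i: "i < m" for i
      proof (cases "even i")
        case True
        then have "f0 i = u (i div 2)" using less[OF i] by blast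
        moreover have "i div 2 \<noteq> n" using i True \<open>even m\<close> unfolding n_def by (auto elim!: evenE)
        ultimately show ?thesis using u unfolding onz_def by auto
      next
        case False
        then have "hip F J (f0 i) (u n) = 0" using less[OF i] by blast
        then show ?thesis by (metis complex_cnj_zero hip_sym)
      qed
      have "(\<Sum>i<m. smul F J (hip F J (s m) (f0 i)) (f0 i)) = 0"
        by (rule sum.neutral) (simp add: sm z)
      then have "f0 m = nrm (u n)" using fm by (simp add: sm)
      also have "\<dots> = u n"
      proof -
        have "u n = 0 \<or> norm (u n) = 1" using u unfolding onz_def by blast
        then show ?thesis by (auto simp: nrm_def)
      qed
      finally show ?thesis using True by (simp add: n_def)
    next
      case False
      define n where "n = m div 2"
      have sm: "s m = d' n" using False by (simp add: s_def n_def)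
      let ?t = "\<lambda>i. smul F J (hip F J (d' n) (f0 i)) (f0 i)"
      have tT: "T (?t i) = 0" and tu: "hip F J (?t i) (u k) = 0" if i: "i < m" for i k
      proof -
        have "T (?t i) = 0 \<and> hip F J (?t i) (u k) = 0"
        proof (cases "even i")
          case True
          then have "f0 i = u (i div 2)" using less[OF i] by blast
          then have "?t i = 0" by (simp add: hd')
          then show ?thesis by (simp add: linear_0[OF lin])
        next
          case False
          then have "T (f0 i) = 0" "hip F J (f0 i) (u k) = 0" using less[OF i] by blast+
          then show ?thesis by (simp add: Ts hip_smul1)
        qed
        then show "T (?t i) = 0" "hip F J (?t i) (u k) = 0" by blast+
      qed
      define g where "g = d' n - (\<Sum>i<m. ?t i)"
      have fg: "f0 m = nrm g" using fm by (simp add: sm g_def)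
      have Tg: "T g = 0"
        by (simp add: g_def linear_diff[OF lin] linear_sum[OF lin] Td' tT)
      have gu: "hip F J g (u k) = 0" for k
        by (simp add: g_def hip_diff1 hip_sum1 hd' tu)
      show ?thesis using False
        by (simp add: fg nrm_def linear_scale[OF lin] Tg hip_scaleR1 gu)
    qed
  qed
  define nu where "nu m = (if even m then lam (m div 2) else 0)" for m
  have feig: "T (f0 m) = nu m *\<^sub>R f0 m" for m
    using Q[of m] ueig by (cases "even m") (auto simp: nu_def)
  have fcomp: "x = 0" if x: "\<And>m. hip F J x (f0 m) = 0" for x
  proof -
    have xs: "hip F J x (s k) = 0" for k using gs_perp[of x s k] x by (simp add: f0_def)
    have xu: "hip F J x (u n) = 0" for n using xs[of "2 * n"] by (simp add: s_def)
    have xd': "hip F J x (d' n) = 0" for n using xs[of "2 * n + 1"] by (simp add: s_def)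
    have xP: "hip F J x (P y) = 0" for y
    proof -
      have "(\<lambda>i. cnj (hip F J y (u i)) * hip F J x (u i)) sums hip F J x (P y)"
        unfolding P_def by (rule psi_hip2_sums[OF u _ bessel(1)[OF u]]) simp
      then show ?thesis by (simp add: xu sums_unique2[OF _ sums_zero])
    qed
    have xd: "hip F J x (d n) = 0" for n
      using xd'[of n] xP[of "d n"] by (simp add: d'_def hip_diff2)
    have "x \<in> closure (range d)" using D(2) rd by simp
    then obtain q where q: "\<And>k. q k \<in> range d" "q \<longlonglongrightarrow> x" unfolding closure_sequential by blast
    have "(\<lambda>k. hip F J x (q k)) \<longlonglongrightarrow> hip F J x x" by (intro tendsto_hip tendsto_const q(2))
    moreover have "hip F J x (q k) = 0" for k using q(1)[of k] xd by auto
    ultimately have "hip F J x x = 0" by (simp add: LIMSEQ_const_iff)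
    then show ?thesis by (simp add: hip_self)
  qed
  define N where "N = {m. f0 m \<noteq> 0}"
  have infN: "infinite N"
  proof
    assume fin: "finite N"
    define B where "B = f0 ` N \<union> J ` f0 ` N"
    have "finite B" using fin by (simp add: B_def)
    moreover have "span B = UNIV"
    proof (intro set_eqI iffI)
      fix x :: 'a assume "x \<in> UNIV"
      define y where "y = x - (\<Sum>m\<in>N. smul F J (hip F J x (f0 m)) (f0 m))"
      have "hip F J y (f0 k) = 0" for k
      proof (cases "k \<in> N")
        case True
        then show ?thesis unfolding y_def hip_diff1
          by (subst hip_comb[OF f0z _ fin]) (auto simp: N_def)
      next
        case False then show ?thesis by (simp add: N_def)
      qed
      then have "y = 0" by (rule fcomp)
      then have xe: "x = (\<Sum>m\<in>N. smul F J (hip F J x (f0 m)) (f0 m))" by (simp add: y_def)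
      have "smul F J c (f0 m) \<in> span B" if "m \<in> N" for c m
      proof -
        have "f0 m \<in> span B" "J (f0 m) \<in> span B" using that by (auto simp: B_def intro: span_base)
        then show ?thesis by (cases F) (auto simp: smul_def intro!: span_add span_scale)
      qed
      then show "x \<in> span B" by (subst xe) (auto intro: span_sum)
    qed simp
    ultimately show False using infd by blast
  qed
  define f where "f k = f0 (enumerate N k)" for k
  define a where "a k = nu (enumerate N k)" for k
  have fnz: "f k \<noteq> 0" for k using enumerate_in_set[OF infN] by (simp add: f_def N_def)
  have onb: "orthonormal_basis F J f"
    unfolding orthonormal_basis_def
  proof (intro conjI allI impI)
    fix i j :: nat
    show "hip F J (f i) (f j) = (if i = j then 1 else 0)"
    proof (cases "i = j")
      case True
      have "norm (f i) = 1" using f0z fnz[of i] unfolding onz_def f_def by blast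
      then show ?thesis using True by (simp add: hip_self)
    next
      case False
      then have "enumerate N i \<noteq> enumerate N j"
        using enumerate_mono[OF _ infN] by (metis linorder_neqE_nat less_irrefl)
      then show ?thesis using f0z False unfolding onz_def f_def by auto
    qed
  next
    fix x assume x: "\<forall>j. hip F J x (f j) = 0"
    show "x = 0"
    proof (rule fcomp)
      fix m
      show "hip F J x (f0 m) = 0"
      proof (cases "m \<in> N")
        case True
        then obtain k where "enumerate N k = m" using enumerate_Ex[OF infN] by blast
        then show ?thesis using x by (auto simp: f_def)
      next
        case False then show ?thesis by (simp add: N_def)
      qed
    qed
  qed
  moreover have "T (f k) = a k *\<^sub>R f k" for k by (simp add: f_def a_def feig)
  ultimately show ?thesis by blast
qed

end


lemma l2_cs:
  assumes a: "a \<in> l2_seqs" and b: "b \<in> l2_seqs"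
  shows "summable (\<lambda>j. a j * b j)" "\<bar>\<Sum>j. a j * b j\<bar> \<le> l2_norm a * l2_norm b"
proof -
  have sa: "summable (\<lambda>j. (a j)\<^sup>2)" and sb: "summable (\<lambda>j. (b j)\<^sup>2)"
    using a b by (auto simp: l2_seqs_def)
  show s: "summable (\<lambda>j. a j * b j)"
  proof (rule summable_comparison_test)
    show "summable (\<lambda>j. (a j)\<^sup>2 + (b j)\<^sup>2)" by (intro summable_add sa sb)
    show "\<exists>N. \<forall>n\<ge>N. norm (a n * b n) \<le> (a n)\<^sup>2 + (b n)\<^sup>2"
    proof (intro exI[of _ 0] allI impI)
      fix n :: nat
      have "0 \<le> (\<bar>a n\<bar> - \<bar>b n\<bar>)\<^sup>2" by simp
      then have "2 * (\<bar>a n\<bar> * \<bar>b n\<bar>) \<le> (a n)\<^sup>2 + (b n)\<^sup>2"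
        by (simp add: power2_diff power2_abs)
      moreover have "0 \<le> \<bar>a n\<bar> * \<bar>b n\<bar>" by simp
      ultimately have "\<bar>a n\<bar> * \<bar>b n\<bar> \<le> (a n)\<^sup>2 + (b n)\<^sup>2" by linarith
      then show "norm (a n * b n) \<le> (a n)\<^sup>2 + (b n)\<^sup>2" by (simp add: abs_mult)
    qed
  qed
  have part: "\<bar>\<Sum>j<n. a j * b j\<bar> \<le> l2_norm a * l2_norm b" for n
  proof -
    have "(\<Sum>j<n. a j * b j)\<^sup>2 \<le> (\<Sum>j<n. (a j)\<^sup>2) * (\<Sum>j<n. (b j)\<^sup>2)"
      by (rule Cauchy_Schwarz_ineq_sum)
    also have "\<dots> \<le> (\<Sum>j. (a j)\<^sup>2) * (\<Sum>j. (b j)\<^sup>2)"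
      by (intro mult_mono sum_le_suminf sa sb) (auto intro: sum_nonneg suminf_nonneg sa sb)
    also have "\<dots> = (l2_norm a * l2_norm b)\<^sup>2"
      unfolding l2_norm_def using sa sb
      by (simp add: power_mult_distrib suminf_nonneg)
    finally have "(\<Sum>j<n. a j * b j)\<^sup>2 \<le> (l2_norm a * l2_norm b)\<^sup>2" .
    then have "\<bar>\<Sum>j<n. a j * b j\<bar>\<^sup>2 \<le> (l2_norm a * l2_norm b)\<^sup>2" by simp
    moreover have "0 \<le> l2_norm a * l2_norm b"
      using suminf_nonneg[OF sa zero_le_power2] suminf_nonneg[OF sb zero_le_power2] by (simp add: l2_norm_def)
    ultimately show ?thesis by (rule power2_le_imp_le)
  qed
  have "(\<lambda>n. \<bar>\<Sum>j<n. a j * b j\<bar>) \<longlonglongrightarrow> \<bar>\<Sum>j. a j * b j\<bar>"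
    by (intro tendsto_intros summable_LIMSEQ s)
  then show "\<bar>\<Sum>j. a j * b j\<bar> \<le> l2_norm a * l2_norm b"
    by (rule LIMSEQ_le_const2) (use part in auto)
qed

lemma orth_closed_zero:
  assumes a: "a \<in> l2_closed_span v" and orth: "\<And>k. (\<lambda>j. v k j * a j) sums 0"
  shows "a j = 0"
proof -
  have al2: "a \<in> l2_seqs" using a by (simp add: l2_closed_span_def)
  define A where "A = l2_norm a"
  have sa: "summable (\<lambda>j. (a j)\<^sup>2)" using al2 by (simp add: l2_seqs_def)
  have s0: "0 \<le> (\<Sum>j. (a j)\<^sup>2)" by (rule suminf_nonneg[OF sa]) simp
  have A2: "A\<^sup>2 = (\<Sum>j. (a j)\<^sup>2)" unfolding A_def l2_norm_def using s0 by simp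
  have A0: "A \<ge> 0" using s0 by (simp add: A_def l2_norm_def)
  have bnd: "A\<^sup>2 \<le> A * eps" if eps: "eps > 0" for eps
  proof -
    obtain N c where c: "(\<lambda>j. \<Sum>k<N. c k * v k j) \<in> l2_seqs"
      "l2_norm (\<lambda>j. a j - (\<Sum>k<N. c k * v k j)) < eps"
      using a eps unfolding l2_closed_span_def by blast
    define w where "w j = (\<Sum>k<N. c k * v k j)" for j
    have wl2: "w \<in> l2_seqs" using c(1) by (simp add: w_def[abs_def])
    have aw: "(\<lambda>j. a j * w j) sums 0"
    proof -
      have "(\<lambda>j. \<Sum>k<N. c k * (v k j * a j)) sums (\<Sum>k<N. c k * 0)"
        by (intro sums_sum sums_mult orth)
      then show ?thesis by (simp add: w_def sum_distrib_left mult_ac)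
    qed
    have dl2: "(\<lambda>j. a j - w j) \<in> l2_seqs" by (rule l2_diff[OF al2 wl2])
    have "(\<lambda>j. a j * (a j - w j) + a j * w j) sums ((\<Sum>j. a j * (a j - w j)) + 0)"
      by (intro sums_add aw summable_sums l2_cs(1)[OF al2 dl2])
    then have "(\<Sum>j. (a j)\<^sup>2) = (\<Sum>j. a j * (a j - w j))"
      by (simp add: algebra_simps power2_eq_square sums_iff)
    also have "\<dots> \<le> \<bar>\<Sum>j. a j * (a j - w j)\<bar>" by simp
    also have "\<dots> \<le> A * l2_norm (\<lambda>j. a j - w j)" unfolding A_def by (rule l2_cs(2)[OF al2 dl2])
    also have "\<dots> \<le> A * eps" using c(2) A0 by (intro mult_left_mono) (auto simp: w_def)
    finally show ?thesis using A2 by simp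
  qed
  have "A = 0"
  proof (rule ccontr)
    assume "A \<noteq> 0"
    then have "A > 0" using A0 by simp
    then have "A\<^sup>2 \<le> A * (A / 2)" using bnd[of "A / 2"] by simp
    then show False using \<open>A > 0\<close> by (simp add: power2_eq_square)
  qed
  then have "(\<Sum>j. (a j)\<^sup>2) = 0" using A2 by simp
  then have "\<forall>j. (a j)\<^sup>2 = 0" using suminf_eq_zero_iff[OF sa] by simp
  then show ?thesis by simp
qed

context hsp begin

lemma span_imp_inj:
  assumes sep: "\<exists>D::'a set. countable D \<and> closure D = UNIV"
    and infd: "\<forall>B::'a set. finite B \<longrightarrow> span B \<noteq> UNIV"
    and sp: "\<forall>e. orthonormal_basis F J e \<longrightarrow>
       l2_closed_span (\<lambda>k j. (cmod (hip F J (X k) (e j)))\<^sup>2) = l2_seqs"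
  shows "injective_family F J X"
  unfolding injective_family_def
proof (intro allI impI)
  fix T x assume H: "hilbert_schmidt F J T \<and> self_adjoint_op F J T \<and> (\<forall>k. hip F J (T (X k)) (X k) = 0)"
  then have T: "bounded_op F J T" and sa: "self_adjoint_op F J T" and quad: "\<And>k. hip F J (T (X k)) (X k) = 0"
    by (auto simp: hilbert_schmidt_def)
  obtain e where e: "orthonormal_basis F J e" and hs: "summable (\<lambda>j. (norm (T (e j)))\<^sup>2)"
    using H by (auto simp: hilbert_schmidt_def)
  obtain f a where f: "orthonormal_basis F J f" and fe: "\<And>k. T (f k) = a k *\<^sub>R f k"
    using eig_onb[OF T sa e hs sep infd] by blast
  have fn: "norm (f k) = 1" for k by (rule onb_unit[OF f])
  have "summable (\<lambda>k. (norm (T (f k)))\<^sup>2)" by (rule hs_orth_summable[OF sa e hs onb_onz[OF f]])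
  then have al2: "a \<in> l2_seqs" by (simp add: fe fn l2_seqs_def power_mult_distrib)
  define v where "v k j = (cmod (hip F J (X k) (f j)))\<^sup>2" for k j
  have orth: "(\<lambda>j. v k j * a j) sums 0" for k
  proof -
    have ps: "(\<lambda>j. hip F J (T (X k)) (f j) * cnj (hip F J (X k) (f j))) sums hip F J (T (X k)) (X k)"
      by (rule parseval2[OF f])
    have eqT: "hip F J (T (X k)) (f j) = of_real (a j) * hip F J (X k) (f j)" for j
    proof -
      have "hip F J (T (X k)) (f j) = hip F J (X k) (T (f j))" using sa unfolding self_adjoint_op_def by blast
      then show ?thesis by (simp add: fe hip_scaleR2)
    qed
    have termeq: "hip F J (T (X k)) (f j) * cnj (hip F J (X k) (f j)) = complex_of_real (v k j * a j)" for j
    proof -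
      have "hip F J (X k) (f j) * cnj (hip F J (X k) (f j)) = complex_of_real ((cmod (hip F J (X k) (f j)))\<^sup>2)"
        by (rule complex_norm_square[symmetric])
      then show ?thesis unfolding eqT v_def by (simp add: mult.assoc mult.commute)
    qed
    have feq: "(\<lambda>j. hip F J (T (X k)) (f j) * cnj (hip F J (X k) (f j))) = (\<lambda>j. complex_of_real (v k j * a j))"
      by (rule ext) (rule termeq)
    from ps have "(\<lambda>j. complex_of_real (v k j * a j)) sums complex_of_real 0"
      unfolding feq quad[of k] by simp
    then show ?thesis by (simp only: sums_of_real_iff)
  qed
  have "a \<in> l2_closed_span v" using sp f al2 by (simp add: v_def[abs_def])
  then have a0: "a j = 0" for j by (rule orth_closed_zero[OF _ orth])
  have "hip F J (T x) (f k) = 0" for k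
  proof -
    have "hip F J (T x) (f k) = hip F J x (T (f k))" using sa unfolding self_adjoint_op_def by blast
    then show ?thesis by (simp add: fe a0)
  qed
  then show "T x = 0" by (rule onb_complete[OF f])
qed

end

theorem mainTheorem10:
  fixes F :: scalar_field and J :: "'a::{real_inner, complete_space} \<Rightarrow> 'a"
    and X :: "nat \<Rightarrow> 'a"
  assumes "admissible F J"
    and "\<exists>D::'a set. countable D \<and> closure D = UNIV"
    and "\<forall>B::'a set. finite B \<longrightarrow> span B \<noteq> UNIV"
    and "is_frame F J X"
  shows "injective_family F J X \<longleftrightarrow>
    (\<forall>e. orthonormal_basis F J e \<longrightarrow>
       l2_closed_span (\<lambda>k j. (cmod (hip F J (X k) (e j)))\<^sup>2) = l2_seqs)"
proof -
  interpret hsp F J by unfold_locales (rule assms(1))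
  show ?thesis using inj_imp_span span_imp_inj[OF assms(2,3)] by blast
qed

end
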